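(* Let $\Gamma_1$ be an $n\times n$ matrix and $\Gamma_2=BB^T$ for an $n\times k$ matrix $B$ such that $(\Gamma_1^T,B)$ is controllable, i.e. $\mathrm{span}$ of the columns of $B,\Gamma_1^TB,\dots,(\Gamma_1^T)^mB$ is $\mathbb R^n$ for some $m\ge0$. Let $R(t)$, $t\ge0$, be a smooth family of symmetric $n\times n$ matrices. Then the Cauchy problem $$\dot V=-\Gamma_1V-V\Gamma_1^T-R(t)-V\Gamma_2V,\qquad \lim_{t\to0^+}V^{-1}=0$$ is well posed: there exists a solution which is invertible for small $t>0$ with $V(t)^{-1}\to0$ as $t\to0^+$, and it is unique on some maximal interval of definition $I\subseteq(0,+\infty)$. Moreover $V(t)>0$ for small $t>0$.
   Context: $V(t)>0$ means positive definite. *)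

theory Defs
  imports "HOL-Analysis.Analysis"
begin

primrec matpow :: "real^'n^'n \<Rightarrow> nat \<Rightarrow> real^'n^'n" where
  "matpow A 0 = mat 1"
| "matpow A (Suc j) = A ** matpow A j"

definition controllable :: "real^'n^'n \<Rightarrow> real^'k^'n \<Rightarrow> bool" where
  "controllable A B \<longleftrightarrow>
     (\<exists>m::nat. span (\<Union>j\<in>{0..m}. columns (matpow A j ** B)) = UNIV)"

definition smooth_on_nonneg :: "(real \<Rightarrow> 'a::real_normed_vector) \<Rightarrow> bool" where
  "smooth_on_nonneg f \<longleftrightarrow>
     (\<exists>D :: nat \<Rightarrow> real \<Rightarrow> 'a. D 0 = f \<and>
        (\<forall>k. \<forall>t\<ge>0. (D k has_vector_derivative D (Suc k) t) (at t within {0..})))"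

definition symmetric_mat :: "real^'n^'n \<Rightarrow> bool" where
  "symmetric_mat A \<longleftrightarrow> transpose A = A"

definition pos_def :: "real^'n^'n \<Rightarrow> bool" where
  "pos_def A \<longleftrightarrow> symmetric_mat A \<and> (\<forall>x. x \<noteq> 0 \<longrightarrow> x \<bullet> (A *v x) > 0)"

definition riccati_sol ::
  "real^'n^'n \<Rightarrow> real^'n^'n \<Rightarrow> (real \<Rightarrow> real^'n^'n) \<Rightarrow> real set \<Rightarrow> (real \<Rightarrow> real^'n^'n) \<Rightarrow> bool" where
  "riccati_sol G1 G2 R I V \<longleftrightarrow>
     (\<forall>t\<in>I. (V has_vector_derivative
        (- (G1 ** V t) - (V t ** transpose G1) - R t - (V t ** G2 ** V t))) (at t))"

definition inv_to_zero :: "(real \<Rightarrow> real^'n^'n) \<Rightarrow> bool" where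
  "inv_to_zero V \<longleftrightarrow>
     (\<exists>\<delta>>0. \<forall>t. 0 < t \<and> t < \<delta> \<longrightarrow> invertible (V t)) \<and>
     ((\<lambda>t. matrix_inv (V t)) \<longlongrightarrow> 0) (at_right 0)"

definition ival :: "ereal \<Rightarrow> real set" where
  "ival T = {t. 0 < t \<and> ereal t < T}"

end

theory Submission
  imports Defs
begin


lemma bilinear_mm: "bilinear ((**) :: real^'n^'m \<Rightarrow> real^'p^'n \<Rightarrow> real^'p^'m)"
  unfolding bilinear_def linear_iff
  by (auto simp: matrix_add_ldistrib matrix_scalar_ac scalar_matrix_assoc[symmetric])
     (vector matrix_matrix_mult_def sum.distrib[symmetric] field_simps)

lemma bb_mm: "bounded_bilinear ((**) :: real^'n^'m \<Rightarrow> real^'p^'n \<Rightarrow> real^'p^'m)"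
  using bilinear_mm bilinear_conv_bounded_bilinear by blast

lemma bilinear_mv: "bilinear ((*v) :: real^'n^'m \<Rightarrow> real^'n \<Rightarrow> real^'m)"
  unfolding bilinear_def linear_iff
  by (auto simp: matrix_vector_right_distrib matrix_vector_mult_add_rdistrib 
    matrix_vector_mult_scaleR) (vector matrix_vector_mult_def sum_distrib_left field_simps)

lemma bb_mv: "bounded_bilinear ((*v) :: real^'n^'m \<Rightarrow> real^'n \<Rightarrow> real^'m)"
  using bilinear_mv bilinear_conv_bounded_bilinear by blast

lemma bl_transpose: "bounded_linear (transpose :: real^'n^'m \<Rightarrow> real^'m^'n)"
  unfolding linear_conv_bounded_linear[symmetric] linear_iff
  by (auto simp: transpose_def vec_eq_iff)


primrec picard_it :: "(real \<Rightarrow> 'a \<Rightarrow> 'a) \<Rightarrow> 'a \<Rightarrow> nat \<Rightarrow> real \<Rightarrow> 'a::banach" where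
  "picard_it F x0 0 = (\<lambda>t. x0)"
| "picard_it F x0 (Suc k) = (\<lambda>t. x0 + integral {0..t} (\<lambda>s. F s (picard_it F x0 k s)))"

lemma picard:
  fixes F :: "real \<Rightarrow> 'a::euclidean_space \<Rightarrow> 'a"
  assumes a: "a > 0" and r: "r > 0" and M: "M \<ge> 0" and L: "L \<ge> 0"
    and bnd: "\<And>t x. t \<in> {0..a} \<Longrightarrow> x \<in> cball x0 r \<Longrightarrow> norm (F t x) \<le> M"
    and lip: "\<And>t x y. t \<in> {0..a} \<Longrightarrow> x \<in> cball x0 r \<Longrightarrow> y \<in> cball x0 r \<Longrightarrow>
               norm (F t x - F t y) \<le> L * norm (x - y)"
    and cont: "\<And>b y. b \<in> {0..a} \<Longrightarrow> continuous_on {0..b} y \<Longrightarrow> y ` {0..b} \<subseteq> cball x0 r \<Longrightarrow>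
               continuous_on {0..b} (\<lambda>t. F t (y t))"
  shows "\<exists>e>0. e \<le> a \<and> (\<exists>x. continuous_on {0..e} x \<and> x 0 = x0 \<and> (\<forall>t\<in>{0..e}. x t \<in> cball x0 r) \<and>
           (\<forall>t\<in>{0<..<e}. (x has_vector_derivative F t (x t)) (at t)))"
proof -
  define e where "e = min a (min (r/(M+1)) (1/(2*(L+1))))"
  have e0: "e > 0" using a r M L by (simp add: e_def)
  have ea: "e \<le> a" by (simp add: e_def)
  have eM: "M * e \<le> r"
  proof -
    have "e \<le> r/(M+1)" by (simp add: e_def)
    then have "(M+1) * e \<le> r" using M by (simp add: field_simps)
    then show ?thesis using e0 by (simp add: algebra_simps)
  qed
  have eL: "L * e \<le> 1/2"
  proof -
    have "e \<le> 1/(2*(L+1))" by (simp add: e_def)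
    then have "(L+1) * e \<le> 1/2" using L by (simp add: field_simps)
    then show ?thesis using e0 by (simp add: algebra_simps)
  qed
  have eint: "e \<in> {0..a}" using e0 ea by auto
  define p where "p = picard_it F x0"
  have p0: "p (Suc k) t = x0 + integral {0..t} (\<lambda>s. F s (p k s))" for k t
    by (simp add: p_def)
  have Fbe: "\<And>t x. t \<in> {0..e} \<Longrightarrow> x \<in> cball x0 r \<Longrightarrow> norm (F t x) \<le> M"
    using bnd ea by auto
  have lipe: "\<And>t x y. t \<in> {0..e} \<Longrightarrow> x \<in> cball x0 r \<Longrightarrow> y \<in> cball x0 r \<Longrightarrow>
               norm (F t x - F t y) \<le> L * norm (x - y)" using lip ea by auto
  have intstep: "continuous_on {0..e} (\<lambda>t. x0 + integral {0..t} g) \<and> 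
        (\<forall>t\<in>{0..e}. norm (integral {0..t} g) \<le> B * t)"
    if gc: "continuous_on {0..e} g" and gb: "\<And>t. t \<in> {0..e} \<Longrightarrow> norm (g t) \<le> B" for g :: "real \<Rightarrow> 'a" and B
  proof
    have "\<forall>t\<in>{0..e}. ((\<lambda>u. integral {0..u} g) has_vector_derivative g t) (at t within {0..e})"
      using integral_has_vector_derivative[OF gc] by blast
    then have "continuous_on {0..e} (\<lambda>u. integral {0..u} g)"
      using continuous_on_eq_continuous_within has_vector_derivative_continuous by blast
    then show "continuous_on {0..e} (\<lambda>t. x0 + integral {0..t} g)"
      by (intro continuous_intros)
    show "\<forall>t\<in>{0..e}. norm (integral {0..t} g) \<le> B * t"
    proof
      fix t assume t: "t \<in> {0..e}"
      have "continuous_on {0..t} g" using gc t by (auto intro: continuous_on_subset)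
      then show "norm (integral {0..t} g) \<le> B * t"
        using integral_bound[of 0 t g B] gb t by auto
    qed
  qed
  have C1: "continuous_on {0..e} (p k) \<and> p k ` {0..e} \<subseteq> cball x0 r" for k
  proof (induction k)
    case 0
    then show ?case using r by (auto simp: p_def less_imp_le)
  next
    case (Suc k)
    have gc: "continuous_on {0..e} (\<lambda>s. F s (p k s))" using cont[OF eint] Suc by blast
    have gb: "norm (F t (p k t)) \<le> M" if "t \<in> {0..e}" for t using Fbe Suc that by blast
    from intstep[OF gc gb] have I: "continuous_on {0..e} (\<lambda>t. x0 + integral {0..t} (\<lambda>s. F s (p k s)))"
      "\<forall>t\<in>{0..e}. norm (integral {0..t} (\<lambda>s. F s (p k s))) \<le> M * t" by auto
    have "p (Suc k) t \<in> cball x0 r" if t: "t \<in> {0..e}" for t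
    proof -
      have "M * t \<le> M * e" using t M by (auto intro: mult_left_mono)
      moreover have "norm (integral {0..t} (\<lambda>s. F s (p k s))) \<le> M * t" using I(2) t by blast
      ultimately show ?thesis using eM by (auto simp: p0 dist_norm)
    qed
    then show ?case using I(1) by (auto simp: p0[abs_def])
  qed
  have gcont: "continuous_on {0..e} (\<lambda>s. F s (p k s))" for k using cont[OF eint] C1 by blast
  have gcont_t: "continuous_on {0..t} (\<lambda>s. F s (p k s))" if "t \<in> {0..e}" for k t
    by (rule continuous_on_subset[OF gcont[of k]]) (use that in auto)
  have gint: "(\<lambda>s. F s (p k s)) integrable_on {0..t}" if "t \<in> {0..e}" for k t
  proof -
    have "continuous_on {0..t} (\<lambda>s. F s (p k s))"
      by (rule continuous_on_subset[OF gcont[of k]]) (use that in auto)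
    then show ?thesis by (rule integrable_continuous_real)
  qed
  have C2: "\<forall>t\<in>{0..e}. norm (p (Suc k) t - p k t) \<le> r * (1/2)^k" for k
  proof (induction k)
    case 0
    then show ?case using C1[of 1] by (auto simp: dist_norm norm_minus_commute p_def)
  next
    case (Suc k)
    show ?case
    proof
      fix t assume t: "t \<in> {0..e}"
      have eq: "p (Suc (Suc k)) t - p (Suc k) t = integral {0..t} (\<lambda>s. F s (p (Suc k) s) - F s (p k s))"
        using integral_diff[OF gint[OF t] gint[OF t], of "Suc k" k] by (simp add: p0[of "Suc k" t] p0[of k t])
      have dc: "continuous_on {0..t} (\<lambda>s. F s (p (Suc k) s) - F s (p k s))"
        using gcont_t[OF t] by (auto intro!: continuous_intros)
      have db: "norm (F s (p (Suc k) s) - F s (p k s)) \<le> L * (r * (1/2)^k)" if s: "s \<in> {0..t}" for s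
      proof -
        have se: "s \<in> {0..e}" using s t by auto
        have "norm (F s (p (Suc k) s) - F s (p k s)) \<le> L * norm (p (Suc k) s - p k s)"
          using lipe[OF se] C1 se by blast
        also have "\<dots> \<le> L * (r * (1/2)^k)" using Suc se L by (auto intro: mult_left_mono)
        finally show ?thesis .
      qed
      have "norm (p (Suc (Suc k)) t - p (Suc k) t) \<le> L * (r * (1/2)^k) * (t - 0)"
        unfolding eq using integral_bound[OF _ dc db] t by auto
      also have "\<dots> \<le> L * (r * (1/2)^k) * e" using t L r by (auto intro!: mult_left_mono)
      also have "\<dots> = (L * e) * (r * (1/2)^k)" by simp
      also have "\<dots> \<le> (1/2) * (r * (1/2)^k)" using eL r by (intro mult_right_mono) auto
      also have "\<dots> = r * (1/2)^Suc k" by simp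
      finally show "norm (p (Suc (Suc k)) t - p (Suc k) t) \<le> r * (1/2)^Suc k" .
    qed
  qed
  have C3: "norm (p (k+d) t - p k t) \<le> 2 * r * (1/2)^k * (1 - (1/2)^d)" if t: "t \<in> {0..e}" for k d t
  proof (induction d)
    case 0
    then show ?case by simp
  next
    case (Suc d)
    have "norm (p (k + Suc d) t - p k t) \<le> norm (p (Suc (k+d)) t - p (k+d) t) + norm (p (k+d) t - p k t)"
    proof -
      have "p (k + Suc d) t - p k t = (p (Suc (k+d)) t - p (k+d) t) + (p (k+d) t - p k t)" by simp
      then show ?thesis by (simp only: norm_triangle_ineq)
    qed
    also have "\<dots> \<le> r * (1/2)^(k+d) + 2 * r * (1/2)^k * (1 - (1/2)^d)"
      using C2 t Suc by (intro add_mono) auto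
    also have "\<dots> = 2 * r * (1/2)^k * (1 - (1/2)^Suc d)"
      unfolding power_add power_Suc by (simp add: algebra_simps)
    finally show ?case .
  qed
  have C3': "norm (p m t - p k t) \<le> 2 * r * (1/2)^k" if t: "t \<in> {0..e}" and "k \<le> m" for k m t
  proof -
    obtain d where m: "m = k + d" using \<open>k \<le> m\<close> le_Suc_ex by blast
    have h0: "0 \<le> 2 * r * (1/2::real)^k" using r by simp
    have "2 * r * (1/2)^k * (1 - (1/2)^d) \<le> 2 * r * (1/2)^k * 1"
      by (rule mult_left_mono[OF _ h0]) simp
    then have "2 * r * (1/2)^k * (1 - (1/2)^d) \<le> 2 * r * (1/2)^k" by simp
    then show ?thesis unfolding m using C3[OF t, of k d] by linarith
  qed
  have geo: "(\<lambda>k. 2 * r * (1/2::real)^k) \<longlonglongrightarrow> 0"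
    by (intro tendsto_mult_right_zero LIMSEQ_realpow_zero) auto
  have cauchy: "Cauchy (\<lambda>k. p k t)" if t: "t \<in> {0..e}" for t
  proof (rule metric_CauchyI)
    fix \<epsilon> :: real assume "\<epsilon> > 0"
    then obtain N where N: "\<And>k. k \<ge> N \<Longrightarrow> 2 * r * (1/2)^k < \<epsilon>"
      using geo[unfolded LIMSEQ_def] by (fastforce simp: dist_real_def)
    show "\<exists>N. \<forall>m\<ge>N. \<forall>n\<ge>N. dist (p m t) (p n t) < \<epsilon>"
    proof (intro exI allI impI)
      fix m n assume "m \<ge> N" "n \<ge> N"
      show "dist (p m t) (p n t) < \<epsilon>"
      proof (cases "n \<le> m")
        case True
        then show ?thesis using C3'[OF t True] N[OF \<open>n \<ge> N\<close>] by (simp add: dist_norm)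
      next
        case False
        then show ?thesis using C3'[OF t, of m n] N[OF \<open>m \<ge> N\<close>] 
          by (simp add: dist_norm norm_minus_commute)
      qed
    qed
  qed
  define x where "x t = lim (\<lambda>k. p k t)" for t
  have conv: "(\<lambda>k. p k t) \<longlonglongrightarrow> x t" if "t \<in> {0..e}" for t
    using cauchy[OF that] by (simp add: x_def Cauchy_convergent_iff convergent_LIMSEQ_iff)
  have bnd2: "norm (p k t - x t) \<le> 2 * r * (1/2)^k" if t: "t \<in> {0..e}" for k t
  proof -
    have "(\<lambda>m. norm (p m t - p k t)) \<longlonglongrightarrow> norm (x t - p k t)"
      by (intro tendsto_intros conv t)
    moreover have "\<forall>\<^sub>F m in sequentially. norm (p m t - p k t) \<le> 2 * r * (1/2)^k"
      using C3'[OF t] by (auto simp: eventually_sequentially)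
    ultimately have "norm (x t - p k t) \<le> 2 * r * (1/2)^k"
      by (rule tendsto_upperbound) simp
    then show ?thesis by (simp add: norm_minus_commute)
  qed
  have ul: "uniform_limit {0..e} p x sequentially"
    unfolding uniform_limit_iff
  proof (intro allI impI)
    fix \<epsilon> :: real assume "\<epsilon> > 0"
    then obtain N where N: "\<And>k. k \<ge> N \<Longrightarrow> 2 * r * (1/2)^k < \<epsilon>"
      using geo[unfolded LIMSEQ_def] by (fastforce simp: dist_real_def)
    show "\<forall>\<^sub>F n in sequentially. \<forall>t\<in>{0..e}. dist (p n t) (x t) < \<epsilon>"
      unfolding eventually_sequentially
      using N bnd2 by (metis dist_norm order_le_less_trans)
  qed
  have xc: "continuous_on {0..e} x"
    by (rule uniform_limit_theorem[OF _ ul]) (use C1 in auto)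
  have xb: "x t \<in> cball x0 r" if t: "t \<in> {0..e}" for t
  proof (rule Lim_in_closed_set[OF closed_cball _ _ conv[OF t]])
    show "\<forall>\<^sub>F k in sequentially. p k t \<in> cball x0 r"
      by (rule always_eventually) (use C1 t in blast)
  qed simp
  have x0: "x 0 = x0"
  proof -
    have "p k 0 = x0" for k by (cases k) (simp_all add: p0 p_def)
    then show ?thesis using conv[of 0] e0 LIMSEQ_unique[of "\<lambda>k. x0"] by auto
  qed
  have gxc: "continuous_on {0..e} (\<lambda>s. F s (x s))" using cont[OF eint xc] xb by blast
  have inteq: "x t = x0 + integral {0..t} (\<lambda>s. F s (x s))" if t: "t \<in> {0..e}" for t
  proof -
    have gxi: "(\<lambda>s. F s (x s)) integrable_on {0..t}"
    proof -
      have "continuous_on {0..t} (\<lambda>s. F s (x s))"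
        by (rule continuous_on_subset[OF gxc]) (use t in auto)
      then show ?thesis by (rule integrable_continuous_real)
    qed
    have "(\<lambda>k. p (Suc k) t - (x0 + integral {0..t} (\<lambda>s. F s (x s)))) \<longlonglongrightarrow> 0"
    proof (rule Lim_null_comparison)
      show "(\<lambda>k. L * (2 * r * (1/2)^k) * t) \<longlonglongrightarrow> 0"
        by (intro tendsto_mult_left_zero tendsto_mult_right_zero geo)
      show "\<forall>\<^sub>F k in sequentially. norm (p (Suc k) t - (x0 + integral {0..t} (\<lambda>s. F s (x s))))
              \<le> L * (2 * r * (1/2)^k) * t"
      proof (intro always_eventually allI)
        fix k
        have eq: "p (Suc k) t - (x0 + integral {0..t} (\<lambda>s. F s (x s))) =
                   integral {0..t} (\<lambda>s. F s (p k s) - F s (x s))"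
          using integral_diff[OF gint[OF t] gxi] by (simp add: p0)
        have dc: "continuous_on {0..t} (\<lambda>s. F s (p k s) - F s (x s))"
          using gcont_t[OF t] continuous_on_subset[OF gxc, of "{0..t}"] t by (auto intro!: continuous_intros)
        have db: "norm (F s (p k s) - F s (x s)) \<le> L * (2 * r * (1/2)^k)" if s: "s \<in> {0..t}" for s
        proof -
          have se: "s \<in> {0..e}" using s t by auto
          have "norm (F s (p k s) - F s (x s)) \<le> L * norm (p k s - x s)"
            using lipe[OF se] C1 xb se by blast
          also have "\<dots> \<le> L * (2 * r * (1/2)^k)" using bnd2 se L by (auto intro: mult_left_mono)
          finally show ?thesis .
        qed
        show "norm (p (Suc k) t - (x0 + integral {0..t} (\<lambda>s. F s (x s)))) \<le> L * (2 * r * (1/2)^k) * t"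
          unfolding eq using integral_bound[OF _ dc db] t by auto
      qed
    qed
    then have "(\<lambda>k. p (Suc k) t) \<longlonglongrightarrow> x0 + integral {0..t} (\<lambda>s. F s (x s))"
      by (simp add: Lim_null[symmetric])
    moreover have "(\<lambda>k. p (Suc k) t) \<longlonglongrightarrow> x t" using conv[OF t] by (rule LIMSEQ_Suc)
    ultimately show ?thesis using LIMSEQ_unique by blast
  qed
  have der: "(x has_vector_derivative F t (x t)) (at t)" if t: "t \<in> {0<..<e}" for t
  proof -
    have "((\<lambda>u. x0 + integral {0..u} (\<lambda>s. F s (x s))) has_vector_derivative F t (x t)) (at t within {0..e})"
      using integral_has_vector_derivative[OF gxc, of t] t
      by (auto intro!: derivative_eq_intros)
    then have "((\<lambda>u. x0 + integral {0..u} (\<lambda>s. F s (x s))) has_vector_derivative F t (x t)) (at t)"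
      using t at_within_Icc_at[of 0 t e] by auto
    then show ?thesis
      by (rule has_vector_derivative_transform_within_open[where S="{0<..<e}"])
         (use t inteq in auto)
  qed
  show ?thesis using e0 ea xc x0 xb der by blast
qed


lemmas mm_add_left = bounded_bilinear.add_left[OF bb_mm]
lemmas mm_add_right = bounded_bilinear.add_right[OF bb_mm]
lemmas mm_diff_left = bounded_bilinear.diff_left[OF bb_mm]
lemmas mm_diff_right = bounded_bilinear.diff_right[OF bb_mm]
lemmas mm_minus_left = bounded_bilinear.minus_left[OF bb_mm]
lemmas mm_minus_right = bounded_bilinear.minus_right[OF bb_mm]
lemmas mm_scaleR_left = bounded_bilinear.scaleR_left[OF bb_mm]
lemmas mm_scaleR_right = bounded_bilinear.scaleR_right[OF bb_mm]
lemmas mm_distrib = mm_add_left mm_add_right mm_diff_left mm_diff_right mm_minus_left mm_minus_right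

lemma vderiv_quot:
  fixes f :: "real \<Rightarrow> 'a::real_normed_vector"
  shows "(f has_vector_derivative D) (at t) \<longleftrightarrow> ((\<lambda>s. (f s - f t) /\<^sub>R (s - t)) \<longlongrightarrow> D) (at t)"
proof -
  have eq: "norm (((f y - f t) - (y - t) *\<^sub>R D) /\<^sub>R norm (y - t)) = norm ((f y - f t) /\<^sub>R (y - t) - D)"
    if "y \<noteq> t" for y
  proof -
    have "((f y - f t) - (y - t) *\<^sub>R D) /\<^sub>R (y - t) = (f y - f t) /\<^sub>R (y - t) - (inverse (y - t) * (y - t)) *\<^sub>R D"
      by (simp only: scaleR_diff_right scaleR_scaleR)
    then have "(f y - f t) /\<^sub>R (y - t) - D = ((f y - f t) - (y - t) *\<^sub>R D) /\<^sub>R (y - t)"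
      using that by simp
    then show ?thesis by simp
  qed
  have ev: "\<forall>\<^sub>F y in at t. norm (((f y - f t) - (y - t) *\<^sub>R D) /\<^sub>R norm (y - t)) = norm ((f y - f t) /\<^sub>R (y - t) - D)"
    using eq by (auto simp: eventually_at_filter)
  have "(f has_vector_derivative D) (at t) \<longleftrightarrow>
        ((\<lambda>y. ((f y - f t) - (y - t) *\<^sub>R D) /\<^sub>R norm (y - t)) \<longlongrightarrow> 0) (at t)"
    unfolding has_vector_derivative_def has_derivative_at_within[of _ _ _ UNIV]
    by (simp add: bounded_linear_scaleR_left)
  also have "\<dots> \<longleftrightarrow> ((\<lambda>y. norm (((f y - f t) - (y - t) *\<^sub>R D) /\<^sub>R norm (y - t))) \<longlongrightarrow> 0) (at t)"
    by (rule tendsto_norm_zero_iff[symmetric])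
  also have "\<dots> \<longleftrightarrow> ((\<lambda>y. norm ((f y - f t) /\<^sub>R (y - t) - D)) \<longlongrightarrow> 0) (at t)"
    by (rule tendsto_cong[OF ev])
  also have "\<dots> \<longleftrightarrow> ((\<lambda>y. (f y - f t) /\<^sub>R (y - t) - D) \<longlongrightarrow> 0) (at t)"
    by (rule tendsto_norm_zero_iff)
  also have "\<dots> \<longleftrightarrow> ((\<lambda>s. (f s - f t) /\<^sub>R (s - t)) \<longlongrightarrow> D) (at t)"
    by (rule Lim_null[symmetric])
  finally show ?thesis .
qed

lemma minv: fixes A :: "real^'n^'n" assumes "invertible A"
  shows "A ** matrix_inv A = mat 1" "matrix_inv A ** A = mat 1"
proof -
  have "\<exists>A'. A ** A' = mat 1 \<and> A' ** A = mat 1" using assms by (simp add: invertible_def)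
  then have "A ** matrix_inv A = mat 1 \<and> matrix_inv A ** A = mat 1"
    unfolding matrix_inv_def by (rule someI_ex)
  then show "A ** matrix_inv A = mat 1" "matrix_inv A ** A = mat 1" by auto
qed

lemma minv_unique: fixes A X :: "real^'n^'n" assumes "A ** X = mat 1"
  shows "matrix_inv A = X" "invertible A"
proof -
  show inv: "invertible A" using assms invertible_right_inverse by blast
  have "matrix_inv A = matrix_inv A ** (A ** X)" using assms by simp
  also have "\<dots> = X" using minv[OF inv] by (simp add: matrix_mul_assoc)
  finally show "matrix_inv A = X" .
qed

lemma minv_inv: fixes A :: "real^'n^'n" assumes "invertible A"
  shows "invertible (matrix_inv A)" "matrix_inv (matrix_inv A) = A"
  using minv_unique[OF minv(2)[OF assms]] by auto

lemma minv_transpose: fixes A :: "real^'n^'n" assumes "invertible A"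
  shows "transpose (matrix_inv A) = matrix_inv (transpose A)"
proof -
  have "transpose A ** transpose (matrix_inv A) = mat 1"
    using minv(2)[OF assms] by (metis matrix_transpose_mul transpose_mat)
  then show ?thesis using minv_unique by metis
qed

lemma minv_mat1 [simp]: "matrix_inv (mat 1 :: real^'n^'n) = mat 1"
  using minv_unique[of "mat 1" "mat 1"] by simp

lemma inv_deriv:
  fixes W :: "real \<Rightarrow> real^'n^'n"
  assumes W: "(W has_vector_derivative W') (at t)"
    and ev: "\<forall>\<^sub>F s in at t. invertible (W s)" and it: "invertible (W t)"
  shows "((\<lambda>s. matrix_inv (W s)) has_vector_derivative - (matrix_inv (W t) ** W' ** matrix_inv (W t))) (at t)"
proof -
  define U where "U s = matrix_inv (W s)" for s
  interpret mm: bounded_bilinear "(**) :: real^'n^'n \<Rightarrow> real^'n^'n \<Rightarrow> real^'n^'n" by (rule bb_mm)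
  from mm.pos_bounded obtain K where K: "K > 0" "\<And>(a::real^'n^'n) (b::real^'n^'n). norm (a ** b) \<le> norm a * norm b * K"
    by metis
  have ev': "\<forall>\<^sub>F s in at t. invertible (W s) \<and> s \<noteq> t" using ev by (auto simp: eventually_at_filter elim: eventually_mono)
  have ident: "U s - U t = - (U s ** (W s - W t) ** U t)" if "invertible (W s)" for s
  proof -
    have "U s ** (W s - W t) ** U t = U s ** W s ** U t - U s ** W t ** U t"
      by (simp add: mm_distrib)
    also have "\<dots> = U t - U s"
      using minv[OF that] minv[OF it] unfolding U_def by (simp add: matrix_mul_assoc[symmetric])
    finally show ?thesis by simp
  qed
  have Wc: "(W \<longlongrightarrow> W t) (at t)" using has_vector_derivative_continuous[OF W] by (simp add: isCont_def)
  define c where "c = norm (U t)"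
  have "\<forall>\<^sub>F s in at t. norm (W s - W t) < 1 / (2 * K * K * (c + 1))"
  proof -
    have "0 < c + 1" by (simp add: c_def add_nonneg_pos)
    then have pos: "0 < 1 / (2 * K * K * (c + 1))" using K(1) by simp
    show ?thesis using Wc[unfolded tendsto_iff, rule_format, OF pos] by (simp add: dist_norm)
  qed
  then have Ub: "\<forall>\<^sub>F s in at t. norm (U s - U t) \<le> (2 * c * c * K * K) * norm (W s - W t)"
    using ev
  proof eventually_elim
    case (elim s)
    have c0: "c \<ge> 0" by (simp add: c_def)
    have n1: "norm (U s ** (W s - W t) ** U t) \<le> norm (U s) * norm (W s - W t) * c * K * K"
    proof -
      have "norm (U s ** (W s - W t) ** U t) \<le> norm (U s ** (W s - W t)) * c * K"
        using K(2) c_def by metis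
      also have "\<dots> \<le> (norm (U s) * norm (W s - W t) * K) * c * K"
        using K c0 by (intro mult_right_mono K(2)) auto
      finally show ?thesis by (simp add: ac_simps)
    qed
    have small: "norm (W s - W t) * c * K * K \<le> 1/2"
    proof -
      have Dp: "0 < 2 * K * K * (c + 1)" using K c0 by (simp add: add_nonneg_pos)
      have "norm (W s - W t) * (2 * K * K * (c + 1)) < 1"
        using elim(1) pos_less_divide_eq[OF Dp] by blast
      moreover have "0 \<le> norm (W s - W t) * K * K" using K by simp
      ultimately have "norm (W s - W t) * c * K * K * 2 \<le> 1" by (simp add: algebra_simps)
      then show ?thesis by simp
    qed
    have "norm (U s) \<le> c + norm (U s - U t)" by (simp add: c_def norm_triangle_sub)
    also have "\<dots> \<le> c + norm (U s) * (norm (W s - W t) * c * K * K)"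
      using ident[OF elim(2)] n1 by (simp add: ac_simps)
    also have "\<dots> \<le> c + norm (U s) * (1/2)"
      by (intro add_left_mono mult_left_mono small) auto
    finally have Us: "norm (U s) \<le> 2 * c" by simp
    have "norm (U s - U t) \<le> norm (U s) * norm (W s - W t) * c * K * K"
      using ident[OF elim(2)] n1 by simp
    also have "\<dots> \<le> (2 * c) * norm (W s - W t) * c * K * K"
      using Us K c0 by (intro mult_right_mono) auto
    finally show ?case by (simp add: ac_simps)
  qed
  have Uc: "(U \<longlongrightarrow> U t) (at t)"
  proof -
    have "((\<lambda>s. (2 * c * c * K * K) * norm (W s - W t)) \<longlongrightarrow> (2 * c * c * K * K) * 0) (at t)"
      using Wc by (intro tendsto_intros) (simp add: Lim_null[symmetric] tendsto_norm_zero_iff)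
    then have "((\<lambda>s. U s - U t) \<longlongrightarrow> 0) (at t)"
      using Lim_null_comparison[OF Ub] by simp
    then show ?thesis by (simp add: Lim_null[symmetric])
  qed
  have qW: "((\<lambda>s. (W s - W t) /\<^sub>R (s - t)) \<longlongrightarrow> W') (at t)" using W vderiv_quot by blast
  have "((\<lambda>s. - (U s ** ((W s - W t) /\<^sub>R (s - t)) ** U t)) \<longlongrightarrow> - (U t ** W' ** U t)) (at t)"
    by (intro tendsto_intros mm.tendsto Uc qW)
  then have "((\<lambda>s. (U s - U t) /\<^sub>R (s - t)) \<longlongrightarrow> - (U t ** W' ** U t)) (at t)"
  proof (rule Lim_transform_eventually)
    show "\<forall>\<^sub>F s in at t. - (U s ** ((W s - W t) /\<^sub>R (s - t)) ** U t) = (U s - U t) /\<^sub>R (s - t)"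
      using ev
    proof eventually_elim
      case (elim s)
      show ?case using ident[OF elim]
        by (simp add: matrix_scalar_ac scalar_matrix_assoc[symmetric] scaleR_minus_right[symmetric]
           del: scaleR_minus_right)
    qed
  qed
  then show ?thesis using vderiv_quot unfolding U_def by blast
qed

lemma gronwall0:
  fixes D :: "real \<Rightarrow> 'a::real_inner"
  assumes ab: "a \<le> b" and Dc: "continuous_on {a..b} D" and Da: "D a = 0" and L: "L \<ge> 0"
    and Dd: "\<And>t. t \<in> {a<..<b} \<Longrightarrow> (D has_vector_derivative D' t) (at t)"
    and Db: "\<And>t. t \<in> {a<..<b} \<Longrightarrow> norm (D' t) \<le> L * norm (D t)"
    and t: "t \<in> {a..b}"
  shows "D t = 0"
proof -
  define h where "h s = exp (- (2 * L) * s) * (D s \<bullet> D s)" for s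
  have "h t \<le> h a"
  proof (rule DERIV_nonpos_imp_decreasing_open[of a t h])
    show "a \<le> t" using t by simp
    show "continuous_on {a..t} h" unfolding h_def
      using continuous_on_subset[OF Dc, of "{a..t}"] t by (auto intro!: continuous_intros)
    fix x assume x: "a < x" "x < t"
    then have xi: "x \<in> {a<..<b}" using t by auto
    have dd: "((\<lambda>s. D s \<bullet> D s) has_vector_derivative (D x \<bullet> D' x + D' x \<bullet> D x)) (at x)"
      using bounded_bilinear.has_vector_derivative[OF bounded_bilinear_inner Dd[OF xi] Dd[OF xi]] .
    then have dd': "((\<lambda>s. D s \<bullet> D s) has_real_derivative (2 * (D x \<bullet> D' x))) (at x)"
      by (simp add: has_real_derivative_iff_has_vector_derivative inner_commute)
    have "(h has_real_derivative (- (2 * L) * exp (- (2 * L) * x) * (D x \<bullet> D x) + exp (- (2 * L) * x) * (2 * (D x \<bullet> D' x)))) (at x)"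
      unfolding h_def by (auto intro!: derivative_eq_intros dd')
    moreover have "- (2 * L) * exp (- (2 * L) * x) * (D x \<bullet> D x) + exp (- (2 * L) * x) * (2 * (D x \<bullet> D' x)) \<le> 0"
    proof -
      have "D x \<bullet> D' x \<le> norm (D x) * norm (D' x)" by (rule norm_cauchy_schwarz)
      also have "\<dots> \<le> norm (D x) * (L * norm (D x))" by (intro mult_left_mono Db xi) auto
      also have "\<dots> = L * (D x \<bullet> D x)" by (simp add: power2_norm_eq_inner[symmetric] power2_eq_square)
      finally have "D x \<bullet> D' x \<le> L * (D x \<bullet> D x)" .
      then have "exp (- (2 * L) * x) * (2 * (D x \<bullet> D' x)) \<le> exp (- (2 * L) * x) * (2 * (L * (D x \<bullet> D x)))"
        by (intro mult_left_mono) auto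
      then show ?thesis by (simp add: algebra_simps)
    qed
    ultimately show "\<exists>y. (h has_real_derivative y) (at x) \<and> y \<le> 0" by blast
  qed
  moreover have "h a = 0" by (simp add: h_def Da)
  ultimately have "D t \<bullet> D t \<le> 0" by (simp add: h_def mult_le_0_iff)
  then show ?thesis by (metis inner_eq_zero_iff inner_ge_zero order_antisym)
qed


lemma norm_vec_sq: "norm (x::'a::real_normed_vector^'n) ^ 2 = (\<Sum>i\<in>UNIV. norm (x$i) ^ 2)"
  unfolding norm_vec_def L2_set_def by (simp add: sum_nonneg)

lemma norm_mv: "norm ((A::real^'n^'m) *v x) \<le> norm A * norm x"
proof -
  have "norm (A *v x) ^ 2 = (\<Sum>i\<in>UNIV. ((A$i) \<bullet> x) ^ 2)"
    by (simp add: norm_vec_sq matrix_vector_mul_component)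
  also have "\<dots> \<le> (\<Sum>i\<in>UNIV. (norm (A$i) * norm x) ^ 2)"
  proof (rule sum_mono)
    fix i
    have "\<bar>A$i \<bullet> x\<bar> \<le> norm (A$i) * norm x" by (rule Cauchy_Schwarz_ineq2)
    then show "(A$i \<bullet> x) ^ 2 \<le> (norm (A$i) * norm x) ^ 2"
      by (metis abs_ge_zero power2_abs power_mono)
  qed
  also have "\<dots> = (norm A * norm x) ^ 2"
    by (simp add: power_mult_distrib norm_vec_sq[of A] sum_distrib_right)
  finally show ?thesis
    by (rule power2_le_imp_le) simp
qed

lemma mm_row: "((A::real^'n^'m) ** B) $ i = transpose B *v (A $ i)"
  by (simp add: matrix_matrix_mult_def matrix_vector_mult_def transpose_def vec_eq_iff mult.commute[of "A$i$k" for k])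

lemma norm_transpose: "norm (transpose A) = norm (A::real^'n^'m)"
proof -
  have "transpose A \<bullet> transpose A = A \<bullet> A"
    apply (simp add: inner_vec_def transpose_def)
    apply (rule sum.swap)
    done
  then show ?thesis by (simp add: norm_eq_sqrt_inner)
qed

lemma norm_mm: "norm ((A::real^'n^'m) ** B) \<le> norm A * norm B"
proof -
  have "norm (A ** B) ^ 2 = (\<Sum>i\<in>UNIV. norm (transpose B *v (A$i)) ^ 2)"
    by (simp add: norm_vec_sq mm_row)
  also have "\<dots> \<le> (\<Sum>i\<in>UNIV. (norm B * norm (A$i)) ^ 2)"
  proof (rule sum_mono)
    fix i show "norm (transpose B *v (A$i)) ^ 2 \<le> (norm B * norm (A$i)) ^ 2"
      using norm_mv[of "transpose B" "A$i"] by (simp add: norm_transpose power_mono)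
  qed
  also have "\<dots> = (norm A * norm B) ^ 2"
    by (simp add: power_mult_distrib norm_vec_sq[of A] sum_distrib_left mult.commute)
  finally show ?thesis
    by (rule power2_le_imp_le) simp
qed

lemma norm_mmm: "norm ((A::real^'n^'m) ** B ** C) \<le> norm A * norm B * norm C"
  by (meson norm_mm norm_ge_zero mult_right_mono order_trans)

lemma tr_add: "transpose (A + B) = transpose A + transpose (B::real^'n^'m)"
  by (simp add: transpose_def vec_eq_iff)
lemma tr_diff: "transpose (A - B) = transpose A - transpose (B::real^'n^'m)"
  by (simp add: transpose_def vec_eq_iff)
lemma tr_minus: "transpose (- A) = - transpose (A::real^'n^'m)"
  by (simp add: transpose_def vec_eq_iff)
lemmas tr_simps = tr_add tr_diff tr_minus transpose_scalar matrix_transpose_mul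

lemma matpow_commute: "matpow A j ** A = A ** matpow A j"
  by (induction j) (simp_all add: matrix_mul_assoc[symmetric])

lemma matpow_transpose: "transpose (matpow (transpose A) j) = matpow (A::real^'n^'n) j"
  by (induction j) (simp_all add: matrix_transpose_mul matpow_commute)

lemma inner_column: "x \<bullet> column i C = (transpose C *v x) $ i"
  by (simp add: inner_vec_def column_def matrix_vector_mult_def transpose_def mult.commute)

lemma ctrl_zero:
  fixes G1 :: "real^'n^'n" and B :: "real^'k^'n"
  assumes "controllable (transpose G1) B" and "\<And>j. (transpose B ** matpow G1 j) *v x = 0"
  shows "x = 0"
proof -
  obtain m where m: "span (\<Union>j\<in>{0..m}. columns (matpow (transpose G1) j ** B)) = UNIV"
    using assms(1) unfolding controllable_def by blast
  have "orthogonal x y" if "y \<in> (\<Union>j\<in>{0..m}. columns (matpow (transpose G1) j ** B))" for y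
  proof -
    from that obtain j where "y \<in> columns (matpow (transpose G1) j ** B)" by blast
    then obtain i where y: "y = column i (matpow (transpose G1) j ** B)"
      unfolding columns_def by blast
    have "x \<bullet> y = ((transpose B ** matpow G1 j) *v x) $ i"
      unfolding y inner_column by (simp add: matrix_transpose_mul matpow_transpose)
    then show ?thesis using assms(2) by (simp add: orthogonal_def)
  qed
  then have "orthogonal x x" using orthogonal_to_span[of x _ x] m by blast
  then show ?thesis by (simp add: orthogonal_def)
qed

lemma quad_tr: "x \<bullet> ((transpose P ** N) *v x) = (P *v x) \<bullet> (N *v (x::real^'n))"
proof -
  have "(transpose P ** N) *v x = transpose P *v (N *v x)" by (simp add: matrix_vector_mul_assoc)
  also have "\<dots> = (N *v x) v* P" by simp
  finally have eq: "(transpose P ** N) *v x = (N *v x) v* P" .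
  have "x \<bullet> ((transpose P ** N) *v x) = ((N *v x) v* P) \<bullet> x" unfolding eq by (rule inner_commute)
  also have "\<dots> = (N *v x) \<bullet> (P *v x)" by (rule dot_lmul_matrix)
  finally show ?thesis by (simp add: inner_commute)
qed

lemma sym_inner: assumes "transpose U = U" shows "y \<bullet> (U *v w) = w \<bullet> (U *v (y::real^'n))"
proof -
  have "y \<bullet> (U *v w) = y \<bullet> (transpose U *v w)" using assms by simp
  also have "\<dots> = y \<bullet> (w v* U)" by simp
  also have "\<dots> = (w v* U) \<bullet> y" by (rule inner_commute)
  also have "\<dots> = w \<bullet> (U *v y)" by (rule dot_lmul_matrix)
  finally show ?thesis .
qed

lemma psd_cs:
  fixes U :: "real^'n^'n"
  assumes sym: "transpose U = U" and psd: "\<And>y. 0 \<le> y \<bullet> (U *v y)"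
  shows "(w \<bullet> (U *v y))^2 \<le> (w \<bullet> (U *v w)) * (y \<bullet> (U *v y))"
proof -
  define a where "a = w \<bullet> (U *v w)"
  define b where "b = w \<bullet> (U *v y)"
  define c where "c = y \<bullet> (U *v y)"
  have q: "0 \<le> a + 2 * l * b + l^2 * c" for l
  proof -
    have "0 \<le> (w + l *\<^sub>R y) \<bullet> (U *v (w + l *\<^sub>R y))" by (rule psd)
    also have "\<dots> = a + l * (w \<bullet> (U *v y)) + l * (y \<bullet> (U *v w)) + l * l * c"
      by (simp add: a_def c_def matrix_vector_right_distrib matrix_vector_mult_scaleR inner_add_left
          inner_add_right algebra_simps)
    also have "\<dots> = a + 2 * l * b + l^2 * c"
      using sym_inner[OF sym, of y w] by (simp add: b_def power2_eq_square algebra_simps)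
    finally show ?thesis .
  qed
  have c0: "c \<ge> 0" using psd c_def by simp
  show ?thesis
  proof (cases "c = 0")
    case True
    have "b = 0"
    proof (rule ccontr)
      assume "b \<noteq> 0"
      have "0 \<le> a + 2 * (- (a + 1) / (2 * b)) * b + (- (a + 1) / (2 * b))^2 * c" by (rule q)
      also have "\<dots> = -1" using \<open>b \<noteq> 0\<close> True by (simp add: field_simps)
      finally show False by simp
    qed
    then show ?thesis using True by (simp add: a_def[symmetric] b_def[symmetric] c_def[symmetric])
  next
    case False
    then have cp: "c > 0" using c0 by simp
    have "0 \<le> a + 2 * (- b / c) * b + (- b / c)^2 * c" by (rule q)
    also have "\<dots> = a - b^2 / c" using cp by (simp add: field_simps power2_eq_square)
    finally have "b^2 / c \<le> a" by simp
    then have "b^2 \<le> a * c" using cp by (simp add: divide_le_eq)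
    then show ?thesis by (simp add: a_def[symmetric] b_def[symmetric] c_def[symmetric])
  qed
qed

lemma psd_normsq:
  fixes U :: "real^'n^'n"
  assumes sym: "transpose U = U" and psd: "\<And>y. 0 \<le> y \<bullet> (U *v y)"
  shows "norm (U *v y) ^ 2 \<le> norm U * (y \<bullet> (U *v y))"
proof (cases "norm (U *v y) = 0")
  case True
  then show ?thesis using psd[of y] by simp
next
  case False
  let ?w = "U *v y"
  have "(?w \<bullet> (U *v y))^2 \<le> (?w \<bullet> (U *v ?w)) * (y \<bullet> (U *v y))" by (rule psd_cs[OF sym psd])
  also have "\<dots> \<le> (norm ?w * (norm U * norm ?w)) * (y \<bullet> (U *v y))"
  proof (rule mult_right_mono[OF _ psd])
    have "?w \<bullet> (U *v ?w) \<le> norm ?w * norm (U *v ?w)" by (rule norm_cauchy_schwarz)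
    also have "\<dots> \<le> norm ?w * (norm U * norm ?w)" by (intro mult_left_mono norm_mv) auto
    finally show "?w \<bullet> (U *v ?w) \<le> norm ?w * (norm U * norm ?w)" .
  qed
  finally have "(norm ?w ^ 2)^2 \<le> norm ?w ^ 2 * (norm U * (y \<bullet> (U *v y)))"
    by (simp add: power2_norm_eq_inner[symmetric] power2_eq_square algebra_simps)
  then show ?thesis using False by (simp add: power2_eq_square)
qed

lemma near_id_invertible:
  fixes X :: "real^'n^'n"
  assumes "norm (X - mat 1) < 1"
  shows "invertible X"
proof -
  have "inj ((*v) X)"
  proof (rule injI)
    fix y z assume "X *v y = X *v z"
    then have h: "X *v (y - z) = 0" by (simp add: matrix_vector_mult_diff_distrib)
    have "(mat 1 - X) *v (y - z) = y - z" using h by (simp add: matrix_vector_mult_diff_rdistrib)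
    then have "norm (y - z) \<le> norm (mat 1 - X) * norm (y - z)" by (metis norm_mv)
    moreover have "norm (mat 1 - X) < 1" using assms by (simp add: norm_minus_commute)
    ultimately show "y = z"
      by (metis mult_less_cancel_right2 norm_ge_zero not_le eq_iff_diff_eq_0 norm_le_zero_iff)
  qed
  then show ?thesis using matrix_left_invertible_injective invertible_left_inverse by blast
qed

lemma posdef_invertible:
  fixes U :: "real^'n^'n"
  assumes "pos_def U" shows "invertible U"
proof -
  have "inj ((*v) U)"
  proof (rule injI)
    fix y z assume "U *v y = U *v z"
    then have h: "U *v (y - z) = 0" by (simp add: matrix_vector_mult_diff_distrib)
    show "y = z"
    proof (rule ccontr)
      assume "y \<noteq> z" then have "y - z \<noteq> 0" by simp
      then have "(y - z) \<bullet> (U *v (y - z)) > 0" using assms by (simp add: pos_def_def)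
      then show False using h by simp
    qed
  qed
  then show ?thesis using matrix_left_invertible_injective invertible_left_inverse by blast
qed

lemma posdef_inv:
  fixes U :: "real^'n^'n"
  assumes "pos_def U" shows "pos_def (matrix_inv U)"
proof -
  have iU: "invertible U" by (rule posdef_invertible[OF assms])
  have sym: "transpose U = U" using assms by (simp add: pos_def_def symmetric_mat_def)
  have "transpose (matrix_inv U) = matrix_inv U" using minv_transpose[OF iU] sym by simp
  moreover have "z \<bullet> (matrix_inv U *v z) > 0" if "z \<noteq> 0" for z
  proof -
    define y where "y = matrix_inv U *v z"
    have zy: "z = U *v y" unfolding y_def using minv(1)[OF iU] by (simp add: matrix_vector_mul_assoc)
    have "y \<noteq> 0" using zy that by auto
    then have "y \<bullet> (U *v y) > 0" using assms by (simp add: pos_def_def)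
    moreover have "z \<bullet> (matrix_inv U *v z) = y \<bullet> (U *v y)"
      unfolding y_def[symmetric] zy
      by (simp add: matrix_vector_mul_assoc minv(2)[OF iU] inner_commute)
    ultimately show ?thesis by simp
  qed
  ultimately show ?thesis by (simp add: pos_def_def symmetric_mat_def)
qed

lemma quad_lip:
  fixes X Y C :: "real^'n^'n"
  assumes "norm X \<le> \<rho>" "norm Y \<le> \<rho>"
  shows "norm (X ** C ** X - Y ** C ** Y) \<le> 2 * norm C * \<rho> * norm (X - Y)"
proof -
  have eq: "X ** C ** X - Y ** C ** Y = (X - Y) ** C ** X + Y ** C ** (X - Y)"
    by (simp add: mm_distrib)
  have a1: "norm ((X - Y) ** C ** X) \<le> norm (X - Y) * norm C * \<rho>"
    using order_trans[OF norm_mmm[of "X - Y" C X] mult_left_mono[OF assms(1)]] by simp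
  have "norm Y * norm C * norm (X - Y) \<le> \<rho> * norm C * norm (X - Y)"
    using assms(2) by (intro mult_right_mono) auto
  then have a2: "norm (Y ** C ** (X - Y)) \<le> \<rho> * norm C * norm (X - Y)"
    using norm_mmm[of Y C "X - Y"] by linarith
  have "norm (X ** C ** X - Y ** C ** Y) \<le> norm (X - Y) * norm C * \<rho> + \<rho> * norm C * norm (X - Y)"
    unfolding eq by (rule order_trans[OF norm_triangle_ineq add_mono[OF a1 a2]])
  also have "\<dots> = 2 * norm C * \<rho> * norm (X - Y)" by (simp add: algebra_simps)
  finally show ?thesis .
qed

lemma tri3: "norm (a + b + c) \<le> norm a + norm b + norm (c::'a::real_normed_vector)"
  by (rule order_trans[OF norm_triangle_ineq add_right_mono[OF norm_triangle_ineq]])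

definition FU :: "real^'n^'n \<Rightarrow> real^'n^'n \<Rightarrow> real^'n^'n \<Rightarrow> real^'n^'n \<Rightarrow> real^'n^'n" where
  "FU G1 G2 Rt X = G2 + X ** G1 + transpose G1 ** X + X ** Rt ** X"

definition FV :: "real^'n^'n \<Rightarrow> real^'n^'n \<Rightarrow> real^'n^'n \<Rightarrow> real^'n^'n \<Rightarrow> real^'n^'n" where
  "FV G1 G2 Rt X = - (G1 ** X) - (X ** transpose G1) - Rt - (X ** G2 ** X)"

lemma FU_lip:
  assumes "norm X \<le> \<rho>" "norm Y \<le> \<rho>"
  shows "norm (FU G1 G2 Rt X - FU G1 G2 Rt Y) \<le> (2 * norm G1 + 2 * norm Rt * \<rho>) * norm (X - Y)"
proof -
  have eq: "FU G1 G2 Rt X - FU G1 G2 Rt Y = (X - Y) ** G1 + transpose G1 ** (X - Y) + (X ** Rt ** X - Y ** Rt ** Y)"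
    by (simp add: FU_def mm_distrib algebra_simps)
  have n1: "norm ((X - Y) ** G1) \<le> norm G1 * norm (X - Y)" using norm_mm[of "X - Y" G1] by (simp add: mult.commute)
  have n2: "norm (transpose G1 ** (X - Y)) \<le> norm G1 * norm (X - Y)" using norm_mm[of "transpose G1" "X - Y"] by (simp add: norm_transpose)
  have n3: "norm (X ** Rt ** X - Y ** Rt ** Y) \<le> 2 * norm Rt * \<rho> * norm (X - Y)" by (rule quad_lip[OF assms])
  have "norm (FU G1 G2 Rt X - FU G1 G2 Rt Y) \<le> norm G1 * norm (X - Y) + norm G1 * norm (X - Y) + 2 * norm Rt * \<rho> * norm (X - Y)"
    unfolding eq by (rule order_trans[OF tri3 add_mono[OF add_mono[OF n1 n2] n3]])
  also have "\<dots> = (2 * norm G1 + 2 * norm Rt * \<rho>) * norm (X - Y)" by (simp add: algebra_simps)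
  finally show ?thesis .
qed

lemma FV_lip:
  assumes "norm X \<le> \<rho>" "norm Y \<le> \<rho>"
  shows "norm (FV G1 G2 Rt X - FV G1 G2 Rt Y) \<le> (2 * norm G1 + 2 * norm G2 * \<rho>) * norm (X - Y)"
proof -
  have eq: "FV G1 G2 Rt X - FV G1 G2 Rt Y = - (G1 ** (X - Y) + (X - Y) ** transpose G1 + (X ** G2 ** X - Y ** G2 ** Y))"
    by (simp add: FV_def mm_distrib algebra_simps)
  have n1: "norm (G1 ** (X - Y)) \<le> norm G1 * norm (X - Y)" using norm_mm[of G1 "X - Y"] by simp
  have n2: "norm ((X - Y) ** transpose G1) \<le> norm G1 * norm (X - Y)" using norm_mm[of "X - Y" "transpose G1"] by (simp add: norm_transpose mult.commute)
  have n3: "norm (X ** G2 ** X - Y ** G2 ** Y) \<le> 2 * norm G2 * \<rho> * norm (X - Y)" by (rule quad_lip[OF assms])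
  have "norm (FV G1 G2 Rt X - FV G1 G2 Rt Y) \<le> norm G1 * norm (X - Y) + norm G1 * norm (X - Y) + 2 * norm G2 * \<rho> * norm (X - Y)"
    unfolding eq norm_minus_cancel by (rule order_trans[OF tri3 add_mono[OF add_mono[OF n1 n2] n3]])
  also have "\<dots> = (2 * norm G1 + 2 * norm G2 * \<rho>) * norm (X - Y)" by (simp add: algebra_simps)
  finally show ?thesis .
qed

lemma ode_unique:
  fixes X Y :: "real \<Rightarrow> 'a::real_inner"
  assumes ab: "a \<le> b" and Xc: "continuous_on {a..b} X" and Yc: "continuous_on {a..b} Y"
    and XY: "X a = Y a" and L: "L \<ge> 0"
    and Xd: "\<And>t. t \<in> {a<..<b} \<Longrightarrow> (X has_vector_derivative F t (X t)) (at t)"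
    and Yd: "\<And>t. t \<in> {a<..<b} \<Longrightarrow> (Y has_vector_derivative F t (Y t)) (at t)"
    and lip: "\<And>t. t \<in> {a<..<b} \<Longrightarrow> norm (F t (X t) - F t (Y t)) \<le> L * norm (X t - Y t)"
    and t: "t \<in> {a..b}"
  shows "X t = Y t"
proof -
  have "(\<lambda>s. X s - Y s) t = 0"
  proof (rule gronwall0[OF ab _ _ L _ _ t, where D'="\<lambda>s. F s (X s) - F s (Y s)"])
    show "continuous_on {a..b} (\<lambda>s. X s - Y s)" using Xc Yc by (intro continuous_intros)
    show "X a - Y a = 0" using XY by simp
    fix s assume s: "s \<in> {a<..<b}"
    show "((\<lambda>s. X s - Y s) has_vector_derivative F s (X s) - F s (Y s)) (at s)"
      using Xd[OF s] Yd[OF s] by (rule derivative_intros)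
    show "norm (F s (X s) - F s (Y s)) \<le> L * norm (X s - Y s)" by (rule lip[OF s])
  qed
  then show ?thesis by simp
qed


lemmas mm_deriv = bounded_bilinear.has_vector_derivative[OF bb_mm]
lemmas mv_deriv = bounded_bilinear.has_vector_derivative[OF bb_mv]
lemmas in_deriv = bounded_bilinear.has_vector_derivative[OF bounded_bilinear_inner]
lemmas tr_deriv = bounded_linear.has_vector_derivative[OF bl_transpose]
lemmas mm_cont = bounded_bilinear.continuous_on[OF bb_mm]
lemmas tr_cont = bounded_linear.continuous_on[OF bl_transpose]

lemma tri4: "norm (a + b + c + d) \<le> norm a + norm b + norm c + norm (d::'a::real_normed_vector)"
  by (rule order_trans[OF norm_triangle_ineq add_right_mono[OF tri3]])

lemma cont_bound:
  fixes f :: "real \<Rightarrow> 'a::real_normed_vector"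
  assumes "continuous_on {a..b} f"
  shows "\<exists>M\<ge>0. \<forall>t\<in>{a..b}. norm (f t) \<le> M"
proof -
  have "compact (f ` {a..b})" using assms by (intro compact_continuous_image) auto
  then obtain M where "\<forall>y\<in>f ` {a..b}. norm y \<le> M" using compact_imp_bounded bounded_iff by metis
  then show ?thesis by (intro exI[of _ "max M 0"]) auto
qed

lemma lin_exists:
  fixes A :: "real \<Rightarrow> real^'n^'n"
  assumes a: "a > 0" and Ac: "continuous_on {0..a} A"
  shows "\<exists>e>0. e \<le> a \<and> (\<exists>P. continuous_on {0..e} P \<and> P 0 = mat 1 \<and>
           (\<forall>t\<in>{0<..<e}. (P has_vector_derivative - (A t ** P t)) (at t)))"
proof -
  obtain Am where Am: "Am \<ge> 0" "\<And>t. t \<in> {0..a} \<Longrightarrow> norm (A t) \<le> Am" using cont_bound[OF Ac] by blast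
  define r :: real where "r = 1"
  have ball: "norm X \<le> norm (mat 1 :: real^'n^'n) + 1" if "X \<in> cball (mat 1) r" for X :: "real^'n^'n"
  proof -
    have "norm (X - mat 1) \<le> 1" using that by (simp add: r_def dist_norm norm_minus_commute)
    then show ?thesis using norm_triangle_sub[of X "mat 1"] by linarith
  qed
  have "\<exists>e>0. e \<le> a \<and> (\<exists>x. continuous_on {0..e} x \<and> x 0 = mat 1 \<and> (\<forall>t\<in>{0..e}. x t \<in> cball (mat 1) r) \<and>
           (\<forall>t\<in>{0<..<e}. (x has_vector_derivative (\<lambda>t X. - (A t ** X)) t (x t)) (at t)))"
  proof (rule picard[where M = "Am * (norm (mat 1 :: real^'n^'n) + 1)" and L = Am])
    show "0 < a" "0 < r" "0 \<le> Am * (norm (mat 1 :: real^'n^'n) + 1)" "0 \<le> Am" using a Am by (auto simp: r_def)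
    fix t and X Y :: "real^'n^'n" assume t: "t \<in> {0..a}" and X: "X \<in> cball (mat 1) r"
    show "norm (- (A t ** X)) \<le> Am * (norm (mat 1 :: real^'n^'n) + 1)"
    proof -
      have "norm (A t) * norm X \<le> Am * (norm (mat 1 :: real^'n^'n) + 1)"
        by (rule mult_mono[OF Am(2)[OF t] ball[OF X]]) (use Am in auto)
      then show ?thesis using norm_mm[of "A t" X] by simp
    qed
    assume Y: "Y \<in> cball (mat 1) r"
    show "norm (- (A t ** X) - - (A t ** Y)) \<le> Am * norm (X - Y)"
    proof -
      have "- (A t ** X) - - (A t ** Y) = - (A t ** (X - Y))" by (simp add: mm_distrib)
      moreover have "norm (A t) * norm (X - Y) \<le> Am * norm (X - Y)"
        using Am(2)[OF t] by (intro mult_right_mono) auto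
      ultimately show ?thesis using norm_mm[of "A t" "X - Y"] by simp
    qed
  next
    fix b and y :: "real \<Rightarrow> real^'n^'n" assume b: "b \<in> {0..a}" and yc: "continuous_on {0..b} y"
    have "continuous_on {0..b} A" using Ac b by (auto intro: continuous_on_subset)
    then show "continuous_on {0..b} (\<lambda>t. - (A t ** y t))"
      by (intro continuous_intros mm_cont yc)
  qed
  then show ?thesis by auto
qed

lemma R_cont:
  assumes "smooth_on_nonneg R"
  shows "continuous_on {0..} R"
proof -
  obtain D where D0: "D 0 = R" and Dd: "\<And>k t. t \<ge> 0 \<Longrightarrow> (D k has_vector_derivative D (Suc k) t) (at t within {0..})"
    using assms unfolding smooth_on_nonneg_def by blast
  have "continuous (at t within {0..}) R" if "t \<in> {0..}" for t
    using has_vector_derivative_continuous[OF Dd[of t 0]] that D0 by simp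
  then show ?thesis using continuous_on_eq_continuous_within by blast
qed

lemma FU_tr:
  assumes "transpose G2 = G2" "transpose Rt = Rt"
  shows "transpose (FU G1 G2 Rt X) = FU G1 G2 Rt (transpose X)"
  using assms by (simp add: FU_def tr_simps matrix_mul_assoc algebra_simps)

lemma U_exists:
  fixes G1 G2 :: "real^'n^'n" and R :: "real \<Rightarrow> real^'n^'n"
  assumes Rc: "continuous_on {0..} R" and Rm: "Rm \<ge> 0" "\<And>t. t \<in> {0..1} \<Longrightarrow> norm (R t) \<le> Rm"
  shows "\<exists>e>0. e \<le> 1 \<and> (\<exists>U. continuous_on {0..e} U \<and> U 0 = 0 \<and> (\<forall>t\<in>{0..e}. norm (U t) \<le> 1) \<and>
           (\<forall>t\<in>{0<..<e}. (U has_vector_derivative FU G1 G2 (R t) (U t)) (at t)))"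
proof -
  have "\<exists>e>0. e \<le> 1 \<and> (\<exists>x. continuous_on {0..e} x \<and> x 0 = 0 \<and> (\<forall>t\<in>{0..e}. x t \<in> cball 0 1) \<and>
           (\<forall>t\<in>{0<..<e}. (x has_vector_derivative (\<lambda>t X. FU G1 G2 (R t) X) t (x t)) (at t)))"
  proof (rule picard[where M = "norm G2 + 2 * norm G1 + Rm" and L = "2 * norm G1 + 2 * Rm"])
    show "(0::real) < 1" "(0::real) < 1" "0 \<le> norm G2 + 2 * norm G1 + Rm" "0 \<le> 2 * norm G1 + 2 * Rm"
      using Rm by auto
    fix t X Y assume t: "t \<in> {0..1::real}" and X: "X \<in> cball (0::real^'n^'n) 1"
    have nX: "norm X \<le> 1" using X by simp
    have nR: "norm (R t) \<le> Rm" using Rm(2)[OF t] .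
    show "norm (FU G1 G2 (R t) X) \<le> norm G2 + 2 * norm G1 + Rm"
    proof -
      have "norm (FU G1 G2 (R t) X) \<le> norm G2 + norm (X ** G1) + norm (transpose G1 ** X) + norm (X ** R t ** X)"
        unfolding FU_def by (rule tri4)
      moreover have "norm (X ** G1) \<le> norm G1"
      proof -
        have "norm X * norm G1 \<le> 1 * norm G1" using nX by (intro mult_right_mono) auto
        then show ?thesis using norm_mm[of X G1] by simp
      qed
      moreover have "norm (transpose G1 ** X) \<le> norm G1"
      proof -
        have "norm G1 * norm X \<le> norm G1 * 1" using nX by (intro mult_left_mono) auto
        then show ?thesis using norm_mm[of "transpose G1" X] by (simp add: norm_transpose)
      qed
      moreover have "norm (X ** R t ** X) \<le> Rm"
      proof -
        have "norm X * norm (R t) * norm X \<le> 1 * Rm * 1"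
          using nX nR Rm(1) by (intro mult_mono) auto
        then show ?thesis using norm_mmm[of X "R t" X] by simp
      qed
      ultimately show ?thesis by simp
    qed
    assume Y: "Y \<in> cball (0::real^'n^'n) 1"
    have nY: "norm Y \<le> 1" using Y by simp
    have "norm (FU G1 G2 (R t) X - FU G1 G2 (R t) Y) \<le> (2 * norm G1 + 2 * norm (R t) * 1) * norm (X - Y)"
      by (rule FU_lip[OF nX nY])
    also have "\<dots> \<le> (2 * norm G1 + 2 * Rm) * norm (X - Y)"
      using nR by (intro mult_right_mono) auto
    finally show "norm (FU G1 G2 (R t) X - FU G1 G2 (R t) Y) \<le> (2 * norm G1 + 2 * Rm) * norm (X - Y)" .
  next
    fix b and y :: "real \<Rightarrow> real^'n^'n" assume b: "b \<in> {0..1}" and yc: "continuous_on {0..b} y"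
    have "continuous_on {0..b} R" using Rc by (rule continuous_on_subset) auto
    then show "continuous_on {0..b} (\<lambda>t. FU G1 G2 (R t) (y t))"
      unfolding FU_def by (intro continuous_intros mm_cont yc)
  qed
  then show ?thesis by auto
qed


lemma alg_gen:
  fixes P U F A :: "real^'n^'n"
  shows "(transpose P ** U) ** (- (A ** P)) + (transpose P ** F + transpose (- (A ** P)) ** U) ** P
         = transpose P ** (F - (transpose A ** U + U ** A)) ** P"
  by (simp add: mm_distrib tr_simps matrix_mul_assoc algebra_simps)

lemma key_A:
  fixes G1 G2 R U :: "real^'n^'n"
  assumes "transpose U = U" "transpose R = R"
  shows "FU G1 G2 R U - (transpose (G1 + (1/2) *\<^sub>R (R ** U)) ** U + U ** (G1 + (1/2) *\<^sub>R (R ** U))) = G2"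
proof -
  have t: "transpose (G1 + (1/2) *\<^sub>R (R ** U)) = transpose G1 + (1/2) *\<^sub>R (U ** R)"
    using assms by (simp add: tr_simps)
  have "transpose (G1 + (1/2) *\<^sub>R (R ** U)) ** U + U ** (G1 + (1/2) *\<^sub>R (R ** U))
        = transpose G1 ** U + U ** G1 + ((1/2) *\<^sub>R (U ** R ** U) + (1/2) *\<^sub>R (U ** R ** U))"
    unfolding t by (simp add: mm_distrib mm_scaleR_left mm_scaleR_right matrix_mul_assoc algebra_simps)
  also have "\<dots> = transpose G1 ** U + U ** G1 + U ** R ** U"
    by (simp add: scaleR_left_distrib[symmetric])
  finally show ?thesis by (simp add: FU_def algebra_simps)
qed

lemma key_Q:
  fixes G1 G2 R U :: "real^'n^'n"
  shows "FU G1 G2 R U - (transpose G1 ** U + U ** G1) = G2 + U ** R ** U"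
  by (simp add: FU_def algebra_simps)

lemma alg_V:
  fixes U V :: "real^'n^'n"
  assumes uv: "U ** V = mat 1" and vu: "V ** U = mat 1"
  shows "- (V ** FU G1 G2 Rt U ** V) = FV G1 G2 Rt V"
proof -
  have h1: "X ** U ** V = X" for X :: "real^'n^'n" using uv by (simp add: matrix_mul_assoc[symmetric])
  have h2: "X ** V ** U = X" for X :: "real^'n^'n" using vu by (simp add: matrix_mul_assoc[symmetric])
  show ?thesis
    by (simp add: FU_def FV_def mm_distrib matrix_mul_assoc h1 h2 vu uv algebra_simps)
qed

lemma quad_nonneg: "0 \<le> x \<bullet> ((transpose C ** C) *v (x::real^'n))"
  using quad_tr[of x C C] by simp


lemma mat_deriv3:
  fixes P U :: "real \<Rightarrow> real^'n^'n"
  assumes "(P has_vector_derivative P') (at s)" "(U has_vector_derivative U') (at s)"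
  shows "((\<lambda>s. transpose (P s) ** U s ** P s) has_vector_derivative
          ((transpose (P s) ** U s) ** P' + (transpose (P s) ** U' + transpose P' ** U s) ** P s)) (at s)"
  by (rule mm_deriv[OF mm_deriv[OF tr_deriv[OF assms(1)] assms(2)] assms(1)])

lemma quad_deriv:
  fixes M :: "real \<Rightarrow> real^'n^'n"
  assumes "(M has_vector_derivative M') (at s)"
  shows "((\<lambda>s. x \<bullet> (M s *v x)) has_real_derivative (x \<bullet> (M' *v x))) (at s)"
proof -
  have "((\<lambda>s. M s *v x) has_vector_derivative (M s *v 0 + M' *v x)) (at s)"
    by (rule mv_deriv[OF assms has_vector_derivative_const])
  then have "((\<lambda>s. x \<bullet> (M s *v x)) has_vector_derivative (x \<bullet> (M s *v 0 + M' *v x) + 0 \<bullet> (M s *v x))) (at s)"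
    by (rule in_deriv[OF has_vector_derivative_const])
  then show ?thesis by (simp add: has_real_derivative_iff_has_vector_derivative)
qed

lemma quad_cont:
  fixes M :: "real \<Rightarrow> real^'n^'n"
  assumes "continuous_on S M"
  shows "continuous_on S (\<lambda>s. x \<bullet> (M s *v x))"
  using bounded_bilinear.continuous_on[OF bb_mv assms continuous_on_const]
  by (intro continuous_intros) auto

lemma existence:
  fixes G1 :: "real^'n^'n" and B :: "real^'k^'n" and R :: "real \<Rightarrow> real^'n^'n"
  assumes ctrl: "controllable (transpose G1) B" and Rc: "continuous_on {0..} R"
    and Rs: "\<And>t. t \<ge> 0 \<Longrightarrow> transpose (R t) = R t"
  shows "\<exists>e>0. \<exists>V. (\<forall>t\<in>{0<..<e}. (V has_vector_derivative FV G1 (B ** transpose B) (R t) (V t)) (at t) \<and> pos_def (V t))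
                \<and> ((\<lambda>t. matrix_inv (V t)) \<longlongrightarrow> 0) (at_right 0)"
proof -
  define G2 where "G2 = B ** transpose B"
  have G2s: "transpose G2 = G2" by (simp add: G2_def matrix_transpose_mul)
  obtain Rm where Rm: "Rm \<ge> 0" "\<And>t. t\<in>{0..1} \<Longrightarrow> norm (R t) \<le> Rm"
    using cont_bound[OF continuous_on_subset[OF Rc, of "{0..1}"]] by auto
  obtain e1 U where e1: "e1 > 0" "e1 \<le> 1" and Uc: "continuous_on {0..e1} U" and U0: "U 0 = 0"
    and Ub: "\<And>t. t\<in>{0..e1} \<Longrightarrow> norm (U t) \<le> 1"
    and Ud: "\<And>t. t\<in>{0<..<e1} \<Longrightarrow> (U has_vector_derivative FU G1 G2 (R t) (U t)) (at t)"
    using U_exists[OF Rc Rm] by blast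
  have Rb: "norm (R t) \<le> Rm" if "t \<in> {0..e1}" for t using Rm(2) that e1 by auto
  have Rsym: "transpose (R t) = R t" if "t \<in> {0..e1}" for t using Rs that by auto
  have Us: "transpose (U t) = U t" if t: "t \<in> {0..e1}" for t
  proof -
    have a: "0 \<le> e1" using e1 by simp
    have c: "continuous_on {0..e1} (\<lambda>t. transpose (U t))" by (rule tr_cont[OF Uc])
    have d: "((\<lambda>t. transpose (U t)) has_vector_derivative FU G1 G2 (R s) (transpose (U s))) (at s)"
      if s: "s \<in> {0<..<e1}" for s
      using tr_deriv[OF Ud[OF s]] FU_tr[OF G2s Rsym] s by auto
    have l: "norm (FU G1 G2 (R s) (transpose (U s)) - FU G1 G2 (R s) (U s))
             \<le> (2 * norm G1 + 2 * Rm) * norm (transpose (U s) - U s)" if s: "s \<in> {0<..<e1}" for s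
    proof -
      have s': "s \<in> {0..e1}" using s by auto
      have "norm (FU G1 G2 (R s) (transpose (U s)) - FU G1 G2 (R s) (U s))
             \<le> (2 * norm G1 + 2 * norm (R s) * 1) * norm (transpose (U s) - U s)"
        by (rule FU_lip) (use Ub[OF s'] in \<open>auto simp: norm_transpose\<close>)
      also have "\<dots> \<le> (2 * norm G1 + 2 * Rm) * norm (transpose (U s) - U s)"
        using Rb[OF s'] by (intro mult_right_mono) auto
      finally show ?thesis .
    qed
    show ?thesis
      by (rule ode_unique[OF a c Uc _ _ d Ud l t]) (use U0 Rm in \<open>auto simp: transpose_def vec_eq_iff\<close>)
  qed
  define A where "A t = G1 + (1/2) *\<^sub>R (R t ** U t)" for t
  have Rc1: "continuous_on {0..e1} R" using Rc by (rule continuous_on_subset) auto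
  have Ac: "continuous_on {0..e1} A" unfolding A_def
    by (intro continuous_intros mm_cont Rc1 Uc)
  obtain eP P where eP: "eP > 0" "eP \<le> e1" and Pc: "continuous_on {0..eP} P" and P0: "P 0 = mat 1"
    and Pd: "\<And>t. t\<in>{0<..<eP} \<Longrightarrow> (P has_vector_derivative - (A t ** P t)) (at t)"
    using lin_exists[OF e1(1) Ac] by blast
  obtain eQ Q where eQ: "eQ > 0" "eQ \<le> e1" and Qc: "continuous_on {0..eQ} Q" and Q0: "Q 0 = mat 1"
    and Qd: "\<And>t. t\<in>{0<..<eQ} \<Longrightarrow> (Q has_vector_derivative - (G1 ** Q t)) (at t)"
    using lin_exists[OF e1(1), of "\<lambda>t. G1"] by auto
  obtain dP where dP: "dP > 0" "\<And>t. t \<in> {0..eP} \<Longrightarrow> dist t 0 < dP \<Longrightarrow> dist (P t) (P 0) < 1"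
    using Pc[unfolded continuous_on_iff] eP by (metis atLeastAtMost_iff less_imp_le order_refl zero_less_one)
  obtain dQ where dQ: "dQ > 0" "\<And>t. t \<in> {0..eQ} \<Longrightarrow> dist t 0 < dQ \<Longrightarrow> dist (Q t) (Q 0) < 1"
    using Qc[unfolded continuous_on_iff] eQ by (metis atLeastAtMost_iff less_imp_le order_refl zero_less_one)
  define \<epsilon> where "\<epsilon> = min (min eP eQ) (min (dP/2) (dQ/2))"
  have \<epsilon>: "\<epsilon> > 0" "\<epsilon> \<le> eP" "\<epsilon> \<le> eQ" "\<epsilon> \<le> e1" "\<epsilon> < dP" "\<epsilon> < dQ"
    using eP eQ dP dQ by (auto simp: \<epsilon>_def)
  have sub: "{0..\<epsilon>} \<subseteq> {0..e1}" "{0..\<epsilon>} \<subseteq> {0..eP}" "{0..\<epsilon>} \<subseteq> {0..eQ}" using \<epsilon> by auto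
  have subo: "{0<..<\<epsilon>} \<subseteq> {0<..<e1}" "{0<..<\<epsilon>} \<subseteq> {0<..<eP}" "{0<..<\<epsilon>} \<subseteq> {0<..<eQ}" using \<epsilon> by auto
  have Pinv: "invertible (P t)" if "t \<in> {0..\<epsilon>}" for t
  proof (rule near_id_invertible)
    have "dist (P t) (P 0) < 1" using dP(2)[of t] that \<epsilon> by auto
    then show "norm (P t - mat 1) < 1" using P0 by (simp add: dist_norm)
  qed
  have Qinv: "invertible (Q t)" if "t \<in> {0..\<epsilon>}" for t
  proof (rule near_id_invertible)
    have "dist (Q t) (Q 0) < 1" using dQ(2)[of t] that \<epsilon> by auto
    then show "norm (Q t - mat 1) < 1" using Q0 by (simp add: dist_norm)
  qed
  have Uce: "continuous_on {0..\<epsilon>} U" by (rule continuous_on_subset[OF Uc sub(1)])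
  have Pce: "continuous_on {0..\<epsilon>} P" by (rule continuous_on_subset[OF Pc sub(2)])
  have Qce: "continuous_on {0..\<epsilon>} Q" by (rule continuous_on_subset[OF Qc sub(3)])
  have psd: "0 \<le> z \<bullet> (U t *v z)" if t: "t \<in> {0..\<epsilon>}" for t z
  proof -
    define x where "x = matrix_inv (P t) *v z"
    have Px: "P t *v x = z" unfolding x_def using minv(1)[OF Pinv[OF t]] by (simp add: matrix_vector_mul_assoc)
    define f where "f s = x \<bullet> ((transpose (P s) ** U s ** P s) *v x)" for s
    have "f 0 \<le> f t"
    proof (rule DERIV_nonneg_imp_increasing_open[of 0 t f])
      show "0 \<le> t" using t by simp
      show "continuous_on {0..t} f" unfolding f_def
        by (rule quad_cont) (use t in \<open>auto intro!: mm_cont tr_cont intro: continuous_on_subset[OF Pce] continuous_on_subset[OF Uce]\<close>)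
      fix s assume s: "0 < s" "s < t"
      have s1: "s \<in> {0<..<e1}" "s \<in> {0<..<eP}" using s t \<epsilon> by auto
      have s2: "s \<in> {0..e1}" using s1 by auto
      have "((\<lambda>s. transpose (P s) ** U s ** P s) has_vector_derivative
             transpose (P s) ** G2 ** P s) (at s)"
      proof (rule has_vector_derivative_eq_rhs[OF mat_deriv3[OF Pd[OF s1(2)] Ud[OF s1(1)]]])
        show "transpose (P s) ** U s ** - (A s ** P s) + (transpose (P s) ** FU G1 G2 (R s) (U s) + transpose (- (A s ** P s)) ** U s) ** P s
              = transpose (P s) ** G2 ** P s"
          unfolding alg_gen A_def key_A[OF Us[OF s2] Rsym[OF s2]] ..
      qed
      from quad_deriv[OF this, of x]
      have "(f has_real_derivative x \<bullet> ((transpose (P s) ** G2 ** P s) *v x)) (at s)"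
        unfolding f_def .
      moreover have "0 \<le> x \<bullet> ((transpose (P s) ** G2 ** P s) *v x)"
        using quad_nonneg[of x "transpose B ** P s"]
        by (simp add: G2_def matrix_transpose_mul matrix_mul_assoc)
      ultimately show "\<exists>y. (f has_real_derivative y) (at s) \<and> 0 \<le> y" by blast
    qed
    moreover have "f 0 = 0" by (simp add: f_def U0)
    moreover have "f t = z \<bullet> (U t *v z)"
      unfolding f_def matrix_mul_assoc[symmetric] quad_tr Px
      by (simp add: matrix_vector_mul_assoc[symmetric] Px)
    ultimately show ?thesis by simp
  qed
  have pd: "z \<bullet> (U t *v z) > 0" if t: "t \<in> {0<..<\<epsilon>}" and z: "z \<noteq> 0" for t z
  proof (rule ccontr)
    assume "\<not> z \<bullet> (U t *v z) > 0"
    then have z0: "z \<bullet> (U t *v z) = 0" using psd[of t z] t by auto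
    have t': "t \<in> {0..\<epsilon>}" using t by auto
    define x where "x = matrix_inv (Q t) *v z"
    have Qx: "Q t *v x = z" unfolding x_def using minv(1)[OF Qinv[OF t']] by (simp add: matrix_vector_mul_assoc)
    have x0: "x \<noteq> 0" using Qx z by auto
    define q where "q s = x \<bullet> ((transpose (Q s) ** U s ** Q s) *v x)" for s
    have qv: "q s = (Q s *v x) \<bullet> (U s *v (Q s *v x))" for s
      unfolding q_def matrix_mul_assoc[symmetric] quad_tr by (simp add: matrix_vector_mul_assoc)
    have qnn: "q s \<ge> 0" if "s \<in> {0..\<epsilon>}" for s unfolding qv by (rule psd[OF that])
    have qt: "q t = 0" unfolding qv Qx by (rule z0)
    have qc: "continuous_on {0..\<epsilon>} q" unfolding q_def
      by (rule quad_cont) (auto intro!: mm_cont tr_cont Qce Uce)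
    define bq where "bq s = (transpose B ** Q s *v x) \<bullet> (transpose B ** Q s *v x)" for s
    have qd: "(q has_real_derivative (x \<bullet> ((transpose (Q s) ** (G2 + U s ** R s ** U s) ** Q s) *v x))) (at s)"
      and qd_ge: "x \<bullet> ((transpose (Q s) ** (G2 + U s ** R s ** U s) ** Q s) *v x) \<ge> bq s - Rm * q s"
      if s: "s \<in> {0<..<\<epsilon>}" for s
    proof -
      have s1: "s \<in> {0<..<e1}" "s \<in> {0<..<eQ}" using s subo by auto
      have s2: "s \<in> {0..e1}" "s \<in> {0..\<epsilon>}" using s1 s by auto
      have "((\<lambda>s. transpose (Q s) ** U s ** Q s) has_vector_derivative
             transpose (Q s) ** (G2 + U s ** R s ** U s) ** Q s) (at s)"
      proof (rule has_vector_derivative_eq_rhs[OF mat_deriv3[OF Qd[OF s1(2)] Ud[OF s1(1)]]])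
        show "transpose (Q s) ** U s ** - (G1 ** Q s) + (transpose (Q s) ** FU G1 G2 (R s) (U s) + transpose (- (G1 ** Q s)) ** U s) ** Q s
              = transpose (Q s) ** (G2 + U s ** R s ** U s) ** Q s"
          unfolding alg_gen key_Q ..
      qed
      from quad_deriv[OF this, of x]
      show "(q has_real_derivative (x \<bullet> ((transpose (Q s) ** (G2 + U s ** R s ** U s) ** Q s) *v x))) (at s)"
        unfolding q_def .
      define y where "y = Q s *v x"
      have e1': "x \<bullet> ((transpose (Q s) ** (G2 + U s ** R s ** U s) ** Q s) *v x)
           = y \<bullet> (G2 *v y) + (U s *v y) \<bullet> (R s *v (U s *v y))"
      proof -
        have "x \<bullet> ((transpose (Q s) ** (G2 + U s ** R s ** U s) ** Q s) *v x)
              = y \<bullet> ((G2 + U s ** R s ** U s) *v y)"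
          unfolding y_def matrix_mul_assoc[symmetric] quad_tr by (simp add: matrix_vector_mul_assoc)
        also have "\<dots> = y \<bullet> (G2 *v y) + y \<bullet> ((transpose (U s) ** (R s ** U s)) *v y)"
          by (simp add: matrix_vector_mult_add_rdistrib inner_add_right Us[OF s2(1)] matrix_mul_assoc)
        also have "\<dots> = y \<bullet> (G2 *v y) + (U s *v y) \<bullet> (R s *v (U s *v y))"
          by (simp add: quad_tr matrix_vector_mul_assoc)
        finally show ?thesis .
      qed
      have g2: "y \<bullet> (G2 *v y) = bq s"
        unfolding bq_def y_def G2_def using quad_tr[of "Q s *v x" "transpose B" "transpose B"]
        by (simp add: matrix_vector_mul_assoc)
      have lo: "(U s *v y) \<bullet> (R s *v (U s *v y)) \<ge> - (Rm * q s)"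
      proof -
        have "- ((U s *v y) \<bullet> (R s *v (U s *v y))) \<le> norm (U s *v y) * norm (R s *v (U s *v y))"
          using Cauchy_Schwarz_ineq2[of "U s *v y" "R s *v (U s *v y)"] by linarith
        also have "\<dots> \<le> norm (U s *v y) * (Rm * norm (U s *v y))"
        proof (rule mult_left_mono)
          have "norm (R s *v (U s *v y)) \<le> norm (R s) * norm (U s *v y)" by (rule norm_mv)
          also have "\<dots> \<le> Rm * norm (U s *v y)" using Rb[OF s2(1)] by (intro mult_right_mono) auto
          finally show "norm (R s *v (U s *v y)) \<le> Rm * norm (U s *v y)" .
        qed simp
        also have "\<dots> = Rm * norm (U s *v y) ^ 2" by (simp add: power2_eq_square)
        also have "\<dots> \<le> Rm * (norm (U s) * (y \<bullet> (U s *v y)))"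
          using psd_normsq[OF Us[OF s2(1)] psd[OF s2(2)]] Rm(1) by (intro mult_left_mono) auto
        also have "\<dots> \<le> Rm * (1 * (y \<bullet> (U s *v y)))"
          using Ub[OF s2(1)] psd[OF s2(2), of y] Rm(1) by (intro mult_left_mono mult_right_mono) auto
        also have "\<dots> = Rm * q s" by (simp add: qv y_def)
        finally show ?thesis by linarith
      qed
      show "x \<bullet> ((transpose (Q s) ** (G2 + U s ** R s ** U s) ** Q s) *v x) \<ge> bq s - Rm * q s"
        unfolding e1' g2 using lo by linarith
    qed
    have bqnn: "bq s \<ge> 0" for s by (simp add: bq_def)
    have qz: "q s = 0" if s: "s \<in> {0..t}" for s
    proof -
      define h where "h s = exp (Rm * s) * q s" for s
      have "h s \<le> h t"
      proof (rule DERIV_nonneg_imp_increasing_open[of s t h])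
        show "s \<le> t" using s by simp
        show "continuous_on {s..t} h" unfolding h_def
          using continuous_on_subset[OF qc, of "{s..t}"] s t by (auto intro!: continuous_intros)
        fix r assume r: "s < r" "r < t"
        then have r': "r \<in> {0<..<\<epsilon>}" using s t by auto
        have "(h has_real_derivative (Rm * exp (Rm * r) * q r + exp (Rm * r) * (x \<bullet> ((transpose (Q r) ** (G2 + U r ** R r ** U r) ** Q r) *v x)))) (at r)"
          unfolding h_def by (auto intro!: derivative_eq_intros qd[OF r'])
        moreover have "0 \<le> Rm * exp (Rm * r) * q r + exp (Rm * r) * (x \<bullet> ((transpose (Q r) ** (G2 + U r ** R r ** U r) ** Q r) *v x))"
        proof -
          have "exp (Rm * r) * (bq r - Rm * q r) \<le> exp (Rm * r) * (x \<bullet> ((transpose (Q r) ** (G2 + U r ** R r ** U r) ** Q r) *v x))"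
            using qd_ge[OF r'] by (intro mult_left_mono) auto
          moreover have "0 \<le> exp (Rm * r) * bq r" using bqnn by simp
          ultimately show ?thesis by (simp add: algebra_simps)
        qed
        ultimately show "\<exists>y. (h has_real_derivative y) (at r) \<and> 0 \<le> y" by blast
      qed
      then have "exp (Rm * s) * q s \<le> 0" by (simp add: h_def qt)
      then have "q s \<le> 0" by (simp add: mult_le_0_iff)
      moreover have "q s \<ge> 0" using qnn s t by auto
      ultimately show ?thesis by simp
    qed
    have bz: "(transpose B ** Q s) *v x = 0" if s: "s \<in> {0<..<t}" for s
    proof -
      have s': "s \<in> {0<..<\<epsilon>}" using s t by auto
      have "(q has_real_derivative 0) (at s)"
      proof (rule has_field_derivative_transform_within_open[of "\<lambda>_. 0" 0 s "{0<..<t}"])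
        show "((\<lambda>_. 0) has_real_derivative 0) (at s)" by simp
      qed (use s qz in auto)
      then have "x \<bullet> ((transpose (Q s) ** (G2 + U s ** R s ** U s) ** Q s) *v x) = 0"
        using qd[OF s'] DERIV_unique by blast
      then have "bq s \<le> 0" using qd_ge[OF s'] qz[of s] s by auto
      then have "bq s = 0" using bqnn[of s] by linarith
      then show ?thesis by (simp add: bq_def)
    qed
    define F where "F j s = (transpose B ** matpow G1 j ** Q s) *v x" for j s
    have Fz: "\<forall>s\<in>{0<..<t}. F j s = 0" for j
    proof (induction j)
      case 0
      then show ?case using bz by (simp add: F_def)
    next
      case (Suc j)
      show ?case
      proof
        fix s assume s: "s \<in> {0<..<t}"
        have s1: "s \<in> {0<..<eQ}" using s t \<epsilon> by auto
        have d1: "(F j has_vector_derivative - F (Suc j) s) (at s)"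
        proof -
          have "((\<lambda>s. transpose B ** matpow G1 j ** Q s) has_vector_derivative
                 (transpose B ** matpow G1 j) ** (- (G1 ** Q s)) + 0 ** Q s) (at s)"
            by (rule mm_deriv[OF has_vector_derivative_const Qd[OF s1]])
          from mv_deriv[OF this has_vector_derivative_const, of x]
          show ?thesis unfolding F_def
            by (simp add: mm_distrib matrix_mul_assoc matpow_commute[symmetric] bounded_bilinear.minus_left[OF bb_mv])
        qed
        have d2: "(F j has_vector_derivative 0) (at s)"
        proof (rule has_vector_derivative_transform_within_open[of "\<lambda>_. 0" 0 s "{0<..<t}"])
          show "((\<lambda>_. 0) has_vector_derivative 0) (at s)" by simp
        qed (use s Suc.IH in auto)
        show "F (Suc j) s = 0" using vector_derivative_unique_at[OF d1 d2] by simp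
      qed
    qed
    have F0: "(transpose B ** matpow G1 j) *v x = 0" for j
    proof -
      have t0: "0 < t" using t by simp
      have "continuous_on {0..t} (F j)" unfolding F_def
        using continuous_on_subset[OF Qce, of "{0..t}"] t
        by (auto intro!: bounded_bilinear.continuous_on[OF bb_mv] mm_cont)
      then have l1: "(F j \<longlongrightarrow> F j 0) (at_right 0)" using continuous_on_Icc_at_rightD t0 by blast
      have "\<forall>\<^sub>F s in at_right 0. F j s = 0"
        by (rule eventually_at_rightI[OF _ t0]) (use Fz in auto)
      then have l2: "(F j \<longlongrightarrow> 0) (at_right 0)" by (rule tendsto_eventually)
      have "F j 0 = 0" using tendsto_unique[OF _ l1 l2] by simp
      then show ?thesis by (simp add: F_def Q0)
    qed
    have "x = 0" by (rule ctrl_zero[OF ctrl F0])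
    then show False using x0 by simp
  qed
  define V where "V t = matrix_inv (U t)" for t
  have Upd: "pos_def (U t)" if "t \<in> {0<..<\<epsilon>}" for t
    using pd[OF that] Us[of t] that \<epsilon> by (auto simp: pos_def_def symmetric_mat_def)
  have Uinv: "invertible (U t)" if "t \<in> {0<..<\<epsilon>}" for t using posdef_invertible[OF Upd[OF that]] .
  have main: "(V has_vector_derivative FV G1 (B ** transpose B) (R t) (V t)) (at t) \<and> pos_def (V t)"
    if t: "t \<in> {0<..<\<epsilon>}" for t
  proof
    show "pos_def (V t)" unfolding V_def by (rule posdef_inv[OF Upd[OF t]])
    have ev: "\<forall>\<^sub>F s in at t. invertible (U s)"
      using eventually_at_in_open'[of "{0<..<\<epsilon>}" t] t by (auto elim!: eventually_mono intro: Uinv)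
    have "(V has_vector_derivative - (matrix_inv (U t) ** FU G1 G2 (R t) (U t) ** matrix_inv (U t))) (at t)"
      unfolding V_def by (rule inv_deriv[OF Ud ev Uinv[OF t]]) (use t subo in auto)
    moreover have "- (matrix_inv (U t) ** FU G1 G2 (R t) (U t) ** matrix_inv (U t)) = FV G1 G2 (R t) (V t)"
      unfolding V_def by (rule alg_V[OF minv[OF Uinv[OF t]]])
    ultimately show "(V has_vector_derivative FV G1 (B ** transpose B) (R t) (V t)) (at t)"
      by (simp add: G2_def)
  qed
  have lim: "((\<lambda>t. matrix_inv (V t)) \<longlongrightarrow> 0) (at_right 0)"
  proof -
    have "(U \<longlongrightarrow> U 0) (at_right 0)" using continuous_on_Icc_at_rightD[OF Uce \<epsilon>(1)] .
    then have "(U \<longlongrightarrow> 0) (at_right 0)" using U0 by simp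
    moreover have "\<forall>\<^sub>F s in at_right 0. U s = matrix_inv (V s)"
    proof (rule eventually_at_rightI[OF _ \<epsilon>(1)])
      fix s assume "s \<in> {0<..<\<epsilon>}"
      then show "U s = matrix_inv (V s)" unfolding V_def using minv_inv(2)[OF Uinv] by metis
    qed
    ultimately show ?thesis by (rule Lim_transform_eventually)
  qed
  show ?thesis using main lim \<epsilon>(1) by blast
qed


lemma alg_U:
  fixes U W :: "real^'n^'n"
  assumes wu: "W ** U = mat 1" and uw: "U ** W = mat 1"
  shows "- (U ** FV G1 G2 Rt W ** U) = FU G1 G2 Rt U"
proof -
  have h1: "X ** U ** W = X" for X :: "real^'n^'n" using uw by (simp add: matrix_mul_assoc[symmetric])
  have h2: "X ** W ** U = X" for X :: "real^'n^'n" using wu by (simp add: matrix_mul_assoc[symmetric])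
  show ?thesis
    by (simp add: FU_def FV_def mm_distrib matrix_mul_assoc h1 h2 wu uw algebra_simps)
qed

lemma ival_open: "open (ival T)"
proof (cases T)
  case (real r)
  then have "ival T = {0<..<r}" by (auto simp: ival_def)
  then show ?thesis by simp
next
  case PInf
  then have "ival T = {0<..}" by (auto simp: ival_def)
  then show ?thesis by simp
next
  case MInf
  then have "ival T = {}" by (auto simp: ival_def)
  then show ?thesis by simp
qed

lemma ereal_lt_trans: "s \<le> b \<Longrightarrow> ereal b < T \<Longrightarrow> ereal s < T"
  by (metis ereal_less_eq(3) le_less_trans)

lemma ival_mem: "t \<in> ival T \<longleftrightarrow> 0 < t \<and> ereal t < T" by (simp add: ival_def)

lemma riccati_FV: "riccati_sol G1 G2 R I W \<longleftrightarrow> (\<forall>t\<in>I. (W has_vector_derivative FV G1 G2 (R t) (W t)) (at t))"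
  by (simp add: riccati_sol_def FV_def)

lemma uniq:
  fixes G1 G2 :: "real^'n^'n" and R :: "real \<Rightarrow> real^'n^'n"
  assumes Rc: "continuous_on {0..} R"
    and T1: "T1 > 0" "riccati_sol G1 G2 R (ival T1) W1" "inv_to_zero W1"
    and T2: "T2 > 0" "riccati_sol G1 G2 R (ival T2) W2" "inv_to_zero W2"
    and t: "t \<in> ival T1" "t \<in> ival T2"
  shows "W1 t = W2 t"
proof -
  obtain Rm where Rm: "Rm \<ge> 0" "\<And>t. t\<in>{0..1} \<Longrightarrow> norm (R t) \<le> Rm"
    using cont_bound[OF continuous_on_subset[OF Rc, of "{0..1}"]] by auto
  have W1d: "(W1 has_vector_derivative FV G1 G2 (R s) (W1 s)) (at s)" if "s \<in> ival T1" for s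
    using T1(2) that by (simp add: riccati_FV)
  have W2d: "(W2 has_vector_derivative FV G1 G2 (R s) (W2 s)) (at s)" if "s \<in> ival T2" for s
    using T2(2) that by (simp add: riccati_FV)
  obtain \<delta>1 where d1: "\<delta>1 > 0" "\<And>t. 0 < t \<Longrightarrow> t < \<delta>1 \<Longrightarrow> invertible (W1 t)"
    and l1: "((\<lambda>t. matrix_inv (W1 t)) \<longlongrightarrow> 0) (at_right 0)"
    using T1(3) unfolding inv_to_zero_def by blast
  obtain \<delta>2 where d2: "\<delta>2 > 0" "\<And>t. 0 < t \<Longrightarrow> t < \<delta>2 \<Longrightarrow> invertible (W2 t)"
    and l2: "((\<lambda>t. matrix_inv (W2 t)) \<longlongrightarrow> 0) (at_right 0)"
    using T2(3) unfolding inv_to_zero_def by blast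
  obtain c0 where c0: "ereal 0 < ereal c0" "ereal c0 < min T1 T2"
    using ereal_dense2[of 0 "min T1 T2"] T1(1) T2(1) by (auto simp: zero_ereal_def)
  define b where "b = min c0 (min (min \<delta>1 \<delta>2 / 2) (1/2))"
  have b: "0 < b" "b < \<delta>1" "b < \<delta>2" "b \<le> 1/2" "ereal b < T1" "ereal b < T2"
  proof -
    show "0 < b" using c0 d1 d2 by (auto simp: b_def)
    show "b < \<delta>1" "b < \<delta>2" "b \<le> 1/2" using d1 d2 by (auto simp: b_def)
    have "ereal b \<le> ereal c0" by (simp add: b_def)
    moreover have "ereal c0 < T1" "ereal c0 < T2" using c0 by auto
    ultimately show "ereal b < T1" "ereal b < T2" using le_less_trans by blast+
  qed
  have sub1: "s \<in> ival T1" "s \<in> ival T2" if "0 < s" "s \<le> b" for s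
    using that b by (auto simp: ival_mem intro: ereal_lt_trans)
  have stepa: "\<And>s. s \<in> {0..b} \<Longrightarrow> W1 s = W2 s \<or> s = 0"
  proof -
    define U1 where "U1 s = (if s = 0 then 0 else matrix_inv (W1 s))" for s
    define U2 where "U2 s = (if s = 0 then 0 else matrix_inv (W2 s))" for s
    have inv1: "invertible (W1 s)" if "0 < s" "s \<le> b" for s using d1(2) that b by auto
    have inv2: "invertible (W2 s)" if "0 < s" "s \<le> b" for s using d2(2) that b by auto
    have Ud: "(U1 has_vector_derivative FU G1 G2 (R s) (U1 s)) (at s) \<and>
              (U2 has_vector_derivative FU G1 G2 (R s) (U2 s)) (at s)" if s: "0 < s" "s \<le> b" for s
    proof
      have o1: "open {0<..<\<delta>1}" "s \<in> {0<..<\<delta>1}" using s b by auto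
      have ev1: "\<forall>\<^sub>F r in at s. invertible (W1 r)"
        using eventually_at_in_open'[OF o1] by (auto elim!: eventually_mono intro: d1(2))
      have "((\<lambda>r. matrix_inv (W1 r)) has_vector_derivative - (matrix_inv (W1 s) ** FV G1 G2 (R s) (W1 s) ** matrix_inv (W1 s))) (at s)"
        by (rule inv_deriv[OF W1d[OF sub1(1)[OF s]] ev1 inv1[OF s]])
      then have "((\<lambda>r. matrix_inv (W1 r)) has_vector_derivative FU G1 G2 (R s) (U1 s)) (at s)"
        using alg_U[OF minv[OF inv1[OF s]]] s by (simp add: U1_def)
      then show "(U1 has_vector_derivative FU G1 G2 (R s) (U1 s)) (at s)"
        by (rule has_vector_derivative_transform_within_open[where S="{0<..}"]) (use s in \<open>auto simp: U1_def\<close>)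
      have o2: "open {0<..<\<delta>2}" "s \<in> {0<..<\<delta>2}" using s b by auto
      have ev2: "\<forall>\<^sub>F r in at s. invertible (W2 r)"
        using eventually_at_in_open'[OF o2] by (auto elim!: eventually_mono intro: d2(2))
      have "((\<lambda>r. matrix_inv (W2 r)) has_vector_derivative - (matrix_inv (W2 s) ** FV G1 G2 (R s) (W2 s) ** matrix_inv (W2 s))) (at s)"
        by (rule inv_deriv[OF W2d[OF sub1(2)[OF s]] ev2 inv2[OF s]])
      then have "((\<lambda>r. matrix_inv (W2 r)) has_vector_derivative FU G1 G2 (R s) (U2 s)) (at s)"
        using alg_U[OF minv[OF inv2[OF s]]] s by (simp add: U2_def)
      then show "(U2 has_vector_derivative FU G1 G2 (R s) (U2 s)) (at s)"
        by (rule has_vector_derivative_transform_within_open[where S="{0<..}"]) (use s in \<open>auto simp: U2_def\<close>)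
    qed
    have Ucont: "continuous_on {0..b} U1 \<and> continuous_on {0..b} U2"
    proof -
      have c1: "continuous (at s within {0..b}) U1 \<and> continuous (at s within {0..b}) U2" if s: "s \<in> {0..b}" for s
      proof (cases "s = 0")
        case True
        have at: "at 0 within {0..b} = at_right 0" using b by (simp add: at_within_Icc_at_right)
        have ev: "\<forall>\<^sub>F r in at_right 0. matrix_inv (W1 r) = U1 r \<and> matrix_inv (W2 r) = U2 r"
        proof (rule eventually_at_rightI[where b=1])
          fix r :: real assume "r \<in> {0<..<1}"
          then show "matrix_inv (W1 r) = U1 r \<and> matrix_inv (W2 r) = U2 r" by (auto simp: U1_def U2_def)
        qed simp
        have ev1: "\<forall>\<^sub>F r in at_right 0. matrix_inv (W1 r) = U1 r" using ev by (rule eventually_mono) simp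
        have ev2: "\<forall>\<^sub>F r in at_right 0. matrix_inv (W2 r) = U2 r" using ev by (rule eventually_mono) simp
        have "(U1 \<longlongrightarrow> 0) (at_right 0)" by (rule Lim_transform_eventually[OF l1 ev1])
        moreover have "(U2 \<longlongrightarrow> 0) (at_right 0)" by (rule Lim_transform_eventually[OF l2 ev2])
        ultimately show ?thesis using True at by (simp add: continuous_within U1_def U2_def)
      next
        case False
        then have s': "0 < s" "s \<le> b" using s by auto
        show ?thesis using Ud[OF s'] has_vector_derivative_continuous continuous_at_imp_continuous_at_within by blast
      qed
      then show ?thesis using continuous_on_eq_continuous_within by blast
    qed
    obtain \<rho>1 where r1: "\<rho>1 \<ge> 0" "\<And>s. s \<in> {0..b} \<Longrightarrow> norm (U1 s) \<le> \<rho>1" using cont_bound Ucont by blast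
    obtain \<rho>2 where r2: "\<rho>2 \<ge> 0" "\<And>s. s \<in> {0..b} \<Longrightarrow> norm (U2 s) \<le> \<rho>2" using cont_bound Ucont by blast
    define \<rho> where "\<rho> = max \<rho>1 \<rho>2"
    have lip: "norm (FU G1 G2 (R s) (U1 s) - FU G1 G2 (R s) (U2 s)) \<le> (2 * norm G1 + 2 * Rm * \<rho>) * norm (U1 s - U2 s)"
      if s: "s \<in> {0<..<b}" for s
    proof -
      have s': "s \<in> {0..b}" "s \<in> {0..1}" using s b by auto
      have "norm (FU G1 G2 (R s) (U1 s) - FU G1 G2 (R s) (U2 s)) \<le> (2 * norm G1 + 2 * norm (R s) * \<rho>) * norm (U1 s - U2 s)"
        by (rule FU_lip) (use r1(2)[OF s'(1)] r2(2)[OF s'(1)] in \<open>auto simp: \<rho>_def\<close>)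
      also have "\<dots> \<le> (2 * norm G1 + 2 * Rm * \<rho>) * norm (U1 s - U2 s)"
        using Rm(2)[OF s'(2)] r1 r2 by (intro mult_right_mono add_left_mono mult_right_mono) (auto simp: \<rho>_def)
      finally show ?thesis .
    qed
    fix s assume s: "s \<in> {0..b}"
    have "U1 s = U2 s"
    proof (rule ode_unique[OF _ _ _ _ _ _ _ lip s])
      show "0 \<le> b" using b by simp
      show "continuous_on {0..b} U1" "continuous_on {0..b} U2" using Ucont by auto
      show "U1 0 = U2 0" by (simp add: U1_def U2_def)
      show "0 \<le> 2 * norm G1 + 2 * Rm * \<rho>" using Rm r1 r2 by (simp add: \<rho>_def)
    qed (use Ud in auto)
    show "W1 s = W2 s \<or> s = 0"
    proof (cases "s = 0")
      case False
      then have s': "0 < s" "s \<le> b" using s by auto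
      have "matrix_inv (W1 s) = matrix_inv (W2 s)" using \<open>U1 s = U2 s\<close> False by (simp add: U1_def U2_def)
      then have "matrix_inv (matrix_inv (W1 s)) = matrix_inv (matrix_inv (W2 s))" by simp
      then show ?thesis using minv_inv(2)[OF inv1[OF s']] minv_inv(2)[OF inv2[OF s']] by simp
    qed simp
  qed
  show ?thesis
  proof (cases "t \<le> b")
    case True
    then show ?thesis using stepa[of t] t by (auto simp: ival_mem)
  next
    case False
    have sub: "s \<in> ival T1 \<and> s \<in> ival T2" if "s \<in> {b..t}" for s
      using that b t by (auto simp: ival_mem intro: ereal_lt_trans)
    have cw: "continuous_on {b..t} W1 \<and> continuous_on {b..t} W2"
    proof -
      have "continuous (at s within {b..t}) W1 \<and> continuous (at s within {b..t}) W2" if "s \<in> {b..t}" for s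
        using W1d W2d sub[OF that] has_vector_derivative_continuous continuous_at_imp_continuous_at_within by blast
      then show ?thesis using continuous_on_eq_continuous_within by blast
    qed
    obtain \<rho>1 where r1: "\<rho>1 \<ge> 0" "\<And>s. s \<in> {b..t} \<Longrightarrow> norm (W1 s) \<le> \<rho>1" using cont_bound cw by blast
    obtain \<rho>2 where r2: "\<rho>2 \<ge> 0" "\<And>s. s \<in> {b..t} \<Longrightarrow> norm (W2 s) \<le> \<rho>2" using cont_bound cw by blast
    define \<rho> where "\<rho> = max \<rho>1 \<rho>2"
    have lip: "norm (FV G1 G2 (R s) (W1 s) - FV G1 G2 (R s) (W2 s)) \<le> (2 * norm G1 + 2 * norm G2 * \<rho>) * norm (W1 s - W2 s)"
      if s: "s \<in> {b<..<t}" for s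
      by (rule FV_lip) (use r1(2)[of s] r2(2)[of s] s in \<open>auto simp: \<rho>_def\<close>)
    have tt: "t \<in> {b..t}" using False by simp
    show ?thesis
    proof (rule ode_unique[OF _ _ _ _ _ _ _ lip tt])
      show "b \<le> t" using False by simp
      show "continuous_on {b..t} W1" "continuous_on {b..t} W2" using cw by auto
      show "W1 b = W2 b" using stepa[of b] b by auto
      show "0 \<le> 2 * norm G1 + 2 * norm G2 * \<rho>" using r1 r2 by (simp add: \<rho>_def)
    qed (use W1d W2d sub in auto)
  qed
qed


theorem lemmaA4:
  fixes G1 :: "real^'n^'n" and B :: "real^'k^'n" and R :: "real \<Rightarrow> real^'n^'n"
  assumes "controllable (transpose G1) B"
    and "smooth_on_nonneg R"
    and "\<And>t. t \<ge> 0 \<Longrightarrow> symmetric_mat (R t)"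
  shows "\<exists>T::ereal. T > 0 \<and> (\<exists>V.
           riccati_sol G1 (B ** transpose B) R (ival T) V \<and> inv_to_zero V \<and>
           (\<exists>\<delta>>0. \<forall>t. 0 < t \<and> t < \<delta> \<longrightarrow> pos_def (V t)) \<and>
           (\<forall>T' W. T' > 0 \<and> riccati_sol G1 (B ** transpose B) R (ival T') W \<and> inv_to_zero W
              \<longrightarrow> T' \<le> T \<and> (\<forall>t\<in>ival T'. W t = V t)))"
proof -
  define G2 where "G2 = B ** transpose B"
  have Rc: "continuous_on {0..} R" by (rule R_cont[OF assms(2)])
  have Rs: "\<And>t. t \<ge> 0 \<Longrightarrow> transpose (R t) = R t" using assms(3) by (simp add: symmetric_mat_def)
  obtain e0 V0 where e0: "e0 > 0"
    and V0: "\<And>t. t\<in>{0<..<e0} \<Longrightarrow> (V0 has_vector_derivative FV G1 G2 (R t) (V0 t)) (at t) \<and> pos_def (V0 t)"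
    and V0l: "((\<lambda>t. matrix_inv (V0 t)) \<longlongrightarrow> 0) (at_right 0)"
    using existence[OF assms(1) Rc Rs] unfolding G2_def by blast
  define Sol where "Sol T W \<longleftrightarrow> T > 0 \<and> riccati_sol G1 G2 R (ival T) W \<and> inv_to_zero W" for T W
  have ival0: "ival (ereal e0) = {0<..<e0}" by (auto simp: ival_def)
  have S0: "Sol (ereal e0) V0"
    unfolding Sol_def
  proof (intro conjI)
    show "0 < ereal e0" using e0 by simp
    show "riccati_sol G1 G2 R (ival (ereal e0)) V0" unfolding riccati_FV ival0 using V0 by blast
    show "inv_to_zero V0" unfolding inv_to_zero_def
      using e0 V0 V0l posdef_invertible by auto
  qed
  have U: "W1 t = W2 t" if "Sol T1 W1" "Sol T2 W2" "t \<in> ival T1" "t \<in> ival T2" for T1 T2 W1 W2 t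
    using uniq[OF Rc, of T1 G1 G2 W1 T2 W2 t] that unfolding Sol_def by blast
  define S where "S = {T. \<exists>W. Sol T W}"
  define T where "T = Sup S"
  define V where "V t = (SOME y. \<exists>T' W. Sol T' W \<and> t \<in> ival T' \<and> y = W t)" for t
  have VW: "V t = W t" if "Sol T' W" "t \<in> ival T'" for T' W t
  proof -
    have "\<exists>y. \<exists>T' W. Sol T' W \<and> t \<in> ival T' \<and> y = W t" using that by blast
    then have "\<exists>T'' W''. Sol T'' W'' \<and> t \<in> ival T'' \<and> V t = W'' t"
      unfolding V_def by (rule someI_ex)
    then obtain T'' W'' where "Sol T'' W''" "t \<in> ival T''" "V t = W'' t" by blast
    then show ?thesis using U[OF that(1) _ that(2)] by metis
  qed
  have TS: "T' \<le> T" if "Sol T' W" for T' W using that unfolding T_def S_def by (auto intro: Sup_upper)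
  show ?thesis
  proof (intro exI[of _ T] conjI exI[of _ V])
    show "T > 0" using TS[OF S0] e0 by (meson ereal_less(2) less_le_trans)
    show "riccati_sol G1 (B ** transpose B) R (ival T) V"
      unfolding riccati_FV G2_def[symmetric]
    proof
      fix t assume t: "t \<in> ival T"
      then have "ereal t < Sup S" by (simp add: ival_def T_def)
      then obtain T' where "T' \<in> S" "ereal t < T'" using less_Sup_iff by blast
      then obtain W where W: "Sol T' W" and tT: "t \<in> ival T'" using t unfolding S_def by (auto simp: ival_def)
      have "(W has_vector_derivative FV G1 G2 (R t) (W t)) (at t)"
        using W tT unfolding Sol_def riccati_FV by blast
      then have "(V has_vector_derivative FV G1 G2 (R t) (W t)) (at t)"
        by (rule has_vector_derivative_transform_within_open[where S="ival T'"])
           (use ival_open tT VW[OF W] in auto)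
      then show "(V has_vector_derivative FV G1 G2 (R t) (V t)) (at t)" using VW[OF W tT] by simp
    qed
    have VV0: "V t = V0 t" if "t \<in> {0<..<e0}" for t using VW[OF S0] that ival0 by auto
    show "inv_to_zero V" unfolding inv_to_zero_def
    proof (intro conjI exI[of _ e0])
      show "0 < e0" by (rule e0)
      show "\<forall>t. 0 < t \<and> t < e0 \<longrightarrow> invertible (V t)" using VV0 V0 posdef_invertible by auto
      have "\<forall>\<^sub>F t in at_right 0. matrix_inv (V0 t) = matrix_inv (V t)"
        by (rule eventually_at_rightI[OF _ e0]) (use VV0 in auto)
      then show "((\<lambda>t. matrix_inv (V t)) \<longlongrightarrow> 0) (at_right 0)" by (rule Lim_transform_eventually[OF V0l])
    qed
    show "\<exists>\<delta>>0. \<forall>t. 0 < t \<and> t < \<delta> \<longrightarrow> pos_def (V t)"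
      using e0 VV0 V0 by auto
    show "\<forall>T' W. T' > 0 \<and> riccati_sol G1 (B ** transpose B) R (ival T') W \<and> inv_to_zero W
              \<longrightarrow> T' \<le> T \<and> (\<forall>t\<in>ival T'. W t = V t)"
    proof (intro allI impI)
      fix T' W assume "T' > 0 \<and> riccati_sol G1 (B ** transpose B) R (ival T') W \<and> inv_to_zero W"
      then have W: "Sol T' W" unfolding Sol_def G2_def by blast
      show "T' \<le> T \<and> (\<forall>t\<in>ival T'. W t = V t)" using TS[OF W] VW[OF W] by auto
    qed
  qed
qed


end
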